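(* Let $s:\mathcal{X}\times\mathcal{Y}\to\mathbb{R}$ be a fixed measurable nonconformity score, $S_1,\dots,S_d$ probability distributions on $\mathcal{X}\times\mathcal{Y}$, $f$ a function as described in the context, $\rho>0$ and $\alpha\in(0,1)$. For each $i\in[d]$ let $(X_{ij},Y_{ij})_{j=1}^{m_i}$ be i.i.d. from $S_i$, set $V_{ij}=s(X_{ij},Y_{ij})$ (so $V_{ij}\sim s\#S_i$ i.i.d.), let $\hat F_i(x)=\frac{1}{m_i}\sum_{j=1}^{m_i}\mathbb{I}_{(-\infty,x]}(V_{ij})$ and $\hat F_{\min}(x)=\min_{1\le i\le d}\hat F_i(x)$. Let $(X_{n+1},Y_{n+1})$ be such that $V_{n+1}=s(X_{n+1},Y_{n+1})\sim P$ for some $P\in\mathcal{P}_{f,\rho}$, with $V_{n+1}$ independent of $\{V_{ij}\}$. Let $\rho^\star\coloneqq\inf_{P_0\in\mathcal{CH}(s\#S_1,\dots,s\#S_d)}D_f(P\Vert P_0)$ (so $\rho^\star\le\rho$). Set $t\coloneqq\mathcal{Q}\left(g_{f,\rho}^{-1}(1-\alpha);\hat F_{\min}\right)$ and $\widetilde{\mathcal{C}}(x)\coloneqq\{y\in\mathcal{Y}: s(x,y)\le t\}$. Then for any $\epsilon>0$, $$\mathbb{P}\left(Y_{n+1}\in\widetilde{\mathcal{C}}(X_{n+1})\right)\ge\left(1-2\sum_{i=1}^de^{-2m_i\epsilon^2}\right)g_{f,\rho^\star}\left(g_{f,\rho}^{-1}(1-\alpha)-\epsilon\right),$$ where the probability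 is over the source samples and $(X_{n+1},Y_{n+1})$.
   Context: $f:\mathbb{R}\to\mathbb{R}\cup\{+\infty\}$ is a closed convex function with $f(1)=0$ and $f(t)=+\infty$ for $t<0$; for $P\ll Q$, $D_f(P\Vert Q)\coloneqq\int f\left(\frac{dP}{dQ}\right)dQ$. $\mathcal{CH}(P_1,\dots,P_d)\coloneqq\{\sum_i\lambda_iP_i:\lambda_i\ge0,\sum_i\lambda_i=1\}$; $s\#T$ is the push-forward $(s\#T)(A)=T(s^{-1}(A))$. $\mathcal{P}_{f,\rho}\coloneqq\{S\text{ a distribution on }\mathbb{R}:\exists S_0\in\mathcal{CH}(s\#S_1,\dots,s\#S_d),\ D_f(S\Vert S_0)\le\rho\}$. For $r\ge0$, $g_{f,r}(\beta)\coloneqq\inf\{z\in[0,1]:\beta f(z/\beta)+(1-\beta)f((1-z)/(1-\beta))\le r\}$ for $\beta\in[0,1]$, and $g_{f,r}^{-1}(\tau)\coloneqq\sup\{\beta\in[0,1]:g_{f,r}(\beta)\le\tau\}$. For a c.d.f. $F$, $\mathcal{Q}(\beta;F)\coloneqq\inf\{q:F(q)\ge\beta\}$. *)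

theory Defs
  imports "HOL-Probability.Probability"
begin

text \<open>Generator f: R -> R \<union> {+\<infinity>}, modelled as ereal-valued never equal to -\<infinity>.\<close>

definition ext_convex :: "(real \<Rightarrow> ereal) \<Rightarrow> bool" where
  "ext_convex f \<longleftrightarrow> (\<forall>x y t. 0 \<le> t \<and> t \<le> 1 \<longrightarrow>
      f ((1 - t) * x + t * y) \<le> ereal (1 - t) * f x + ereal t * f y)"

text \<open>Closed = lower semicontinuous = closed epigraph.\<close>
definition ext_closed :: "(real \<Rightarrow> ereal) \<Rightarrow> bool" where
  "ext_closed f \<longleftrightarrow> closed {p :: real \<times> real. f (fst p) \<le> ereal (snd p)}"

definition fdiv_generator :: "(real \<Rightarrow> ereal) \<Rightarrow> bool" where
  "fdiv_generator f \<longleftrightarrow> (\<forall>x. f x \<noteq> -\<infinity>) \<and> ext_convex f \<and> ext_closed f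
      \<and> f 1 = 0 \<and> (\<forall>t<0. f t = \<infinity>)"

definition fdiv :: "(real \<Rightarrow> ereal) \<Rightarrow> 'a measure \<Rightarrow> 'a measure \<Rightarrow> ereal" where
  "fdiv f P Q = (if absolutely_continuous Q P \<and> sets P = sets Q then
      (let r = (\<lambda>x. enn2real (RN_deriv Q P x)) in
        enn2ereal (\<integral>\<^sup>+ x. e2ennreal (f (r x)) \<partial>Q) - enn2ereal (\<integral>\<^sup>+ x. e2ennreal (- f (r x)) \<partial>Q))
     else \<infinity>)"

definition mixture :: "nat \<Rightarrow> (nat \<Rightarrow> real) \<Rightarrow> (nat \<Rightarrow> real measure) \<Rightarrow> real measure" where
  "mixture d lam Ms = measure_of UNIV (sets borel)
      (\<lambda>A. \<Sum>i<d. ennreal (lam i) * emeasure (Ms i) A)"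

definition convex_hull_meas :: "nat \<Rightarrow> (nat \<Rightarrow> real measure) \<Rightarrow> real measure set" where
  "convex_hull_meas d Ms = {mixture d lam Ms | lam. (\<forall>i<d. 0 \<le> lam i) \<and> (\<Sum>i<d. lam i) = 1}"

definition ambiguity_set :: "(real \<Rightarrow> ereal) \<Rightarrow> real \<Rightarrow> nat \<Rightarrow> (nat \<Rightarrow> real measure) \<Rightarrow> real measure set" where
  "ambiguity_set f \<rho> d Ms = {S. prob_space S \<and> sets S = sets borel \<and>
      (\<exists>S0\<in>convex_hull_meas d Ms. fdiv f S S0 \<le> ereal \<rho>)}"

text \<open>Recession slope f'(\<infinity>) and the perspective b f(z/b), with 0 f(z/0) = z f'(\<infinity>) (and 0 at z = 0).\<close>
definition recession :: "(real \<Rightarrow> ereal) \<Rightarrow> ereal" where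
  "recession f = (SUP t\<in>{0<..}. f (1 + t) / ereal t)"

definition persp :: "(real \<Rightarrow> ereal) \<Rightarrow> real \<Rightarrow> real \<Rightarrow> ereal" where
  "persp f b z = (if b > 0 then ereal b * f (z / b)
                  else if z = 0 then 0 else ereal z * recession f)"

text \<open>g_{f,r}; for beta < 0 (outside the paper's domain) we use the convention g = 0 = g(0).\<close>
definition g_fun :: "(real \<Rightarrow> ereal) \<Rightarrow> real \<Rightarrow> real \<Rightarrow> real" where
  "g_fun f r \<beta> = (if \<beta> < 0 then 0 else
      Inf {z\<in>{0..1}. persp f \<beta> z + persp f (1 - \<beta>) (1 - z) \<le> ereal r})"

definition g_inv :: "(real \<Rightarrow> ereal) \<Rightarrow> real \<Rightarrow> real \<Rightarrow> real" where
  "g_inv f r \<tau> = Sup {\<beta>\<in>{0..1}. g_fun f r \<beta> \<le> \<tau>}"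

definition quantile :: "real \<Rightarrow> (real \<Rightarrow> real) \<Rightarrow> real" where
  "quantile \<beta> F = Inf {q. F q \<ge> \<beta>}"

definition conf_set :: "'y set \<Rightarrow> ('x \<times> 'y \<Rightarrow> real) \<Rightarrow> real \<Rightarrow> 'x \<Rightarrow> 'y set" where
  "conf_set Ys s t x = {y\<in>Ys. s (x, y) \<le> t}"

end

theory Submission
  imports Defs
begin

lemma fgen_conv:
  assumes f: "fdiv_generator f" and x: "f x < \<infinity>" and y: "f y < \<infinity>" and t: "0 \<le> t" "t \<le> 1"
  shows "f ((1 - t) * x + t * y) < \<infinity> \<and>
    real_of_ereal (f ((1 - t) * x + t * y)) \<le> (1 - t) * real_of_ereal (f x) + t * real_of_ereal (f y)"
proof -
  have nm: "\<And>z. f z \<noteq> -\<infinity>" using f unfolding fdiv_generator_def by auto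
  obtain a where a: "f x = ereal a" using x nm[of x] by (cases "f x") auto
  obtain b where b: "f y = ereal b" using y nm[of y] by (cases "f y") auto
  have c: "f ((1 - t) * x + t * y) \<le> ereal (1 - t) * f x + ereal t * f y"
    using f t unfolding fdiv_generator_def ext_convex_def by blast
  hence c2: "f ((1 - t) * x + t * y) \<le> ereal ((1 - t) * a + t * b)" by (simp add: a b)
  then obtain e where e: "f ((1 - t) * x + t * y) = ereal e"
    using nm[of "(1 - t) * x + t * y"] by (cases "f ((1 - t) * x + t * y)") auto
  show ?thesis using c2 by (simp add: e a b)
qed

lemma fgen_basic:
  assumes f: "fdiv_generator f"
  shows "f 1 = 0" "\<And>t. t < 0 \<Longrightarrow> f t = \<infinity>" "\<And>t. f t \<noteq> -\<infinity>"
  using f unfolding fdiv_generator_def by auto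

lemma fgen_finite:
  assumes f: "fdiv_generator f" and "f t < \<infinity>"
  shows "f t = ereal (real_of_ereal (f t))"
  using assms fgen_basic(3)[OF f, of t] by (cases "f t") auto

lemma fgen_slope:
  assumes f: "fdiv_generator f" and u: "f u < \<infinity>" and v: "f v < \<infinity>" and uc: "u < c" and cv: "c < v"
  shows "f c < \<infinity> \<and> (real_of_ereal (f c) - real_of_ereal (f u)) / (c - u)
          \<le> (real_of_ereal (f v) - real_of_ereal (f c)) / (v - c)"
proof -
  define t where "t = (c - u) / (v - u)"
  have t: "0 \<le> t" "t \<le> 1" using uc cv by (auto simp: t_def field_simps)
  have tv: "t * (v - u) = c - u" using uc cv by (simp add: t_def)
  have ceq: "(1 - t) * u + t * v = c" using tv by (simp add: algebra_simps)
  note h = fgen_conv[OF f u v t, unfolded ceq]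
  let ?a = "real_of_ereal (f u)" and ?b = "real_of_ereal (f v)" and ?e = "real_of_ereal (f c)"
  have "?e \<le> (1 - t) * ?a + t * ?b" using h by simp
  hence "(v - u) * ?e \<le> (v - u) * ((1 - t) * ?a + t * ?b)"
    using uc cv by (intro mult_left_mono) auto
  also have "\<dots> = ((v - u) - t * (v - u)) * ?a + (t * (v - u)) * ?b" by (simp add: algebra_simps)
  also have "\<dots> = (v - c) * ?a + (c - u) * ?b" unfolding tv by simp
  finally have "(v - u) * ?e \<le> (v - c) * ?a + (c - u) * ?b" .
  hence "(?e - ?a) * (v - c) \<le> (?b - ?e) * (c - u)" by (simp add: algebra_simps)
  hence "(?e - ?a) / (c - u) \<le> (?b - ?e) / (v - c)" using uc cv
    by (simp add: field_simps)
  with h show ?thesis by simp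
qed

lemma fgen_support:
  assumes f: "fdiv_generator f" and u: "f u < \<infinity>" and v: "f v < \<infinity>" and uc: "u < c" and cv: "c < v"
  shows "f c < \<infinity> \<and> (\<exists>k. \<forall>t. f t < \<infinity> \<longrightarrow> real_of_ereal (f t) \<ge> real_of_ereal (f c) + k * (t - c))"
proof -
  have fc: "f c < \<infinity>" using fgen_slope[OF assms] by simp
  define L where "L = {(real_of_ereal (f c) - real_of_ereal (f w)) / (c - w) | w. f w < \<infinity> \<and> w < c}"
  define k where "k = Sup L"
  have Lne: "L \<noteq> {}" using u uc unfolding L_def by blast
  have Lub: "\<And>y. f y < \<infinity> \<Longrightarrow> c < y \<Longrightarrow> \<forall>l\<in>L. l \<le> (real_of_ereal (f y) - real_of_ereal (f c)) / (y - c)"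
    unfolding L_def using fgen_slope[OF f] by blast
  have bdd: "bdd_above L" using Lub[OF v cv] by (auto simp: bdd_above_def)
  have "\<forall>t. f t < \<infinity> \<longrightarrow> real_of_ereal (f t) \<ge> real_of_ereal (f c) + k * (t - c)"
  proof (intro allI impI)
    fix t assume ft: "f t < \<infinity>"
    consider "t < c" | "t = c" | "t > c" by linarith
    thus "real_of_ereal (f t) \<ge> real_of_ereal (f c) + k * (t - c)"
    proof cases
      case 1
      have "(real_of_ereal (f c) - real_of_ereal (f t)) / (c - t) \<in> L" unfolding L_def using ft 1 by blast
      hence "(real_of_ereal (f c) - real_of_ereal (f t)) / (c - t) \<le> k" unfolding k_def using bdd by (rule cSup_upper)
      thus ?thesis using 1 by (simp add: field_simps)
    next
      case 2 thus ?thesis by simp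
    next
      case 3
      have "k \<le> (real_of_ereal (f t) - real_of_ereal (f c)) / (t - c)"
        unfolding k_def using Lne Lub[OF ft 3] by (intro cSup_least) auto
      thus ?thesis using 3 by (simp add: field_simps)
    qed
  qed
  with fc show ?thesis by blast
qed

lemma fgen_minorant:
  assumes f: "fdiv_generator f"
  shows "\<exists>c0 k0. \<forall>t. f t < \<infinity> \<longrightarrow> real_of_ereal (f t) \<ge> c0 + k0 * t"
proof (cases "\<exists>u. f u < \<infinity> \<and> u \<noteq> 1")
  case True
  then obtain u where u: "f u < \<infinity>" "u \<noteq> 1" by blast
  have f1: "f 1 < \<infinity>" using fgen_basic(1)[OF f] by simp
  define lo where "lo = min u 1" define hi where "hi = max u 1"
  have lh: "f lo < \<infinity>" "f hi < \<infinity>" "lo < hi" using u f1 by (auto simp: lo_def hi_def min_def max_def)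
  have "lo < (lo + hi) / 2" "(lo + hi) / 2 < hi" using lh by auto
  from fgen_support[OF f lh(1) lh(2) this] obtain k where
    k: "\<forall>t. f t < \<infinity> \<longrightarrow> real_of_ereal (f t) \<ge> real_of_ereal (f ((lo + hi) / 2)) + k * (t - (lo + hi) / 2)" by blast
  show ?thesis
    by (rule exI[of _ "real_of_ereal (f ((lo + hi) / 2)) - k * ((lo + hi) / 2)"], rule exI[of _ k])
       (use k in \<open>auto simp: algebra_simps\<close>)
next
  case False
  thus ?thesis using fgen_basic(1)[OF f] by (intro exI[of _ 0]) auto
qed

lemma fgen_measurable:
  assumes f: "fdiv_generator f"
  shows "f \<in> borel_measurable borel"
proof (subst borel_measurable_ereal_iff_Ioi, intro allI)
  fix a :: ereal
  have cl: "closed {p :: real \<times> real. f (fst p) \<le> ereal (snd p)}"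
    using f unfolding fdiv_generator_def ext_closed_def by blast
  have "open (f -` {a<..})"
  proof (cases a)
    case (real y)
    have "closed ((\<lambda>t. (t, y)) -` {p :: real \<times> real. f (fst p) \<le> ereal (snd p)})"
      by (intro closed_vimage cl continuous_intros)
    moreover have "(\<lambda>t. (t, y)) -` {p :: real \<times> real. f (fst p) \<le> ereal (snd p)} = - (f -` {a<..})"
      using real by auto
    ultimately show ?thesis by (simp add: closed_def)
  next
    case PInf hence "f -` {a<..} = {}" by auto
    thus ?thesis by simp
  next
    case MInf
    hence "f -` {a<..} = UNIV" using fgen_basic(3)[OF f] by (auto simp: ereal_infty_less(2) less_le)
    thus ?thesis by simp
  qed
  thus "f -` {a<..} \<inter> space borel \<in> sets borel" by simp
qed


lemma persp_pos: "b > 0 \<Longrightarrow> persp f b z = ereal b * f (z / b)"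
  by (simp add: persp_def)

lemma hb_nonneg:
  assumes f: "fdiv_generator f" and b: "0 < b" "b < 1" and a: "0 \<le> a" "a \<le> 1"
  shows "persp f b a + persp f (1 - b) (1 - a) \<ge> 0"
proof -
  have p1: "persp f b a = ereal b * f (a / b)" using b by (simp add: persp_pos)
  have p2: "persp f (1 - b) (1 - a) = ereal (1 - b) * f ((1 - a) / (1 - b))" using b by (simp add: persp_pos)
  note nm = fgen_basic(3)[OF f]
  show ?thesis
  proof (cases "f (a / b) < \<infinity> \<and> f ((1 - a) / (1 - b)) < \<infinity>")
    case True
    hence x: "f (a / b) < \<infinity>" and y: "f ((1 - a) / (1 - b)) < \<infinity>" by auto
    have t: "0 \<le> 1 - b" "1 - b \<le> 1" using b by auto
    have eq: "(1 - (1 - b)) * (a / b) + (1 - b) * ((1 - a) / (1 - b)) = 1" using b by (simp add: field_simps)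
    note h = fgen_conv[OF f x y t, unfolded eq]
    have "0 \<le> b * real_of_ereal (f (a / b)) + (1 - b) * real_of_ereal (f ((1 - a) / (1 - b)))"
      using h fgen_basic(1)[OF f] by simp
    thus ?thesis unfolding p1 p2
      by (subst fgen_finite[OF f x], subst fgen_finite[OF f y]) simp
  next
    case False
    hence "f (a / b) = \<infinity> \<or> f ((1 - a) / (1 - b)) = \<infinity>" by auto
    hence "persp f b a = \<infinity> \<or> persp f (1 - b) (1 - a) = \<infinity>" unfolding p1 p2 using b by auto
    moreover have "persp f b a \<noteq> -\<infinity>" "persp f (1 - b) (1 - a) \<noteq> -\<infinity>"
      unfolding p1 p2 using b nm by (auto simp: ereal_mult_eq_MInfty)
    ultimately show ?thesis by auto
  qed
qed

lemma hb_mono: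
  assumes f: "fdiv_generator f" and a: "0 \<le> a" "a < c" and cb: "c \<le> b" and b1: "b < 1"
  shows "persp f c a + persp f (1 - c) (1 - a) \<le> persp f b a + persp f (1 - b) (1 - a)"
proof -
  have c0: "c > 0" "b > 0" using a cb by auto
  have p1: "persp f b a = ereal b * f (a / b)" using c0 by (simp add: persp_pos)
  have p2: "persp f (1 - b) (1 - a) = ereal (1 - b) * f ((1 - a) / (1 - b))" using b1 by (simp add: persp_pos)
  have q1: "persp f c a = ereal c * f (a / c)" using c0 by (simp add: persp_pos)
  have q2: "persp f (1 - c) (1 - a) = ereal (1 - c) * f ((1 - a) / (1 - c))" using b1 cb by (simp add: persp_pos)
  note nm = fgen_basic(3)[OF f]
  have a1: "a \<le> 1" using a cb b1 by auto
  show ?thesis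
  proof (cases "f (a / b) < \<infinity> \<and> f ((1 - a) / (1 - b)) < \<infinity>")
    case True
    hence x: "f (a / b) < \<infinity>" and y: "f ((1 - a) / (1 - b)) < \<infinity>" by auto
    have o: "f 1 < \<infinity>" "real_of_ereal (f 1) = 0" using fgen_basic(1)[OF f] by auto
    define l where "l = (b - c) / (b - a)"
    have l: "0 \<le> l" "l < 1" using a cb by (auto simp: l_def field_simps)
    have lc: "c = l * a + (1 - l) * b"
    proof -
      have "l * (b - a) = b - c" using a cb by (simp add: l_def)
      thus ?thesis by (simp add: algebra_simps)
    qed
    define t1 where "t1 = (1 - l) * b / c"
    have t1: "0 \<le> t1" "t1 \<le> 1" "1 - t1 = l * a / c" using l c0 a unfolding t1_def
      by (auto simp: field_simps lc)
    have e1: "(1 - t1) * 1 + t1 * (a / b) = a / c"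
    proof -
      have "t1 * (a / b) = (1 - l) * a / c" using c0 by (simp add: t1_def)
      hence "(1 - t1) * 1 + t1 * (a / b) = l * a / c + (1 - l) * a / c" using t1(3) by simp
      also have "\<dots> = a / c" using c0 by (simp add: field_simps)
      finally show ?thesis .
    qed
    note h1 = fgen_conv[OF f o(1) x t1(1,2), unfolded e1]
    define t2 where "t2 = (1 - l) * (1 - b) / (1 - c)"
    have c1: "1 - c > 0" using cb b1 by auto
    have lc2: "1 - c = l * (1 - a) + (1 - l) * (1 - b)" using lc by (simp add: algebra_simps)
    have la: "0 \<le> l * (1 - a)" using l a1 by simp
    hence "(1 - l) * (1 - b) \<le> 1 - c" using lc2 by linarith
    hence t2le: "t2 \<le> 1" using c1 unfolding t2_def by simp
    have t20: "0 \<le> t2" using l c1 b1 unfolding t2_def by simp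
    have t23a: "1 - t2 = ((1 - c) - (1 - l) * (1 - b)) / (1 - c)" using c1 unfolding t2_def
      by (simp add: diff_divide_distrib)
    have "(1 - c) - (1 - l) * (1 - b) = l * (1 - a)" using lc2 by linarith
    with t23a have t23: "1 - t2 = l * (1 - a) / (1 - c)" by simp
    note t2 = t20 t2le t23
    have e2: "(1 - t2) * 1 + t2 * ((1 - a) / (1 - b)) = (1 - a) / (1 - c)"
    proof -
      have "t2 * ((1 - a) / (1 - b)) = (1 - l) * (1 - a) / (1 - c)" using b1 by (simp add: t2_def)
      hence "(1 - t2) * 1 + t2 * ((1 - a) / (1 - b)) = l * (1 - a) / (1 - c) + (1 - l) * (1 - a) / (1 - c)" using t2(3) by simp
      also have "\<dots> = (l * (1 - a) + (1 - l) * (1 - a)) / (1 - c)" by (simp add: add_divide_distrib)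
      also have "l * (1 - a) + (1 - l) * (1 - a) = 1 - a" by (simp add: algebra_simps)
      finally show ?thesis by simp
    qed
    note h2 = fgen_conv[OF f o(1) y t2(1,2), unfolded e2]
    let ?X = "real_of_ereal (f (a / b))" and ?Y = "real_of_ereal (f ((1 - a) / (1 - b)))"
    have r1: "c * real_of_ereal (f (a / c)) \<le> (1 - l) * b * ?X"
    proof -
      have "c * real_of_ereal (f (a / c)) \<le> c * (t1 * ?X)" using h1 o c0 by (intro mult_left_mono) auto
      thus ?thesis using c0 by (simp add: t1_def)
    qed
    have r2: "(1 - c) * real_of_ereal (f ((1 - a) / (1 - c))) \<le> (1 - l) * (1 - b) * ?Y"
    proof -
      have "(1 - c) * real_of_ereal (f ((1 - a) / (1 - c))) \<le> (1 - c) * (t2 * ?Y)" using h2 o c1 by (intro mult_left_mono) auto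
      thus ?thesis using c1 by (simp add: t2_def)
    qed
    have nn: "0 \<le> b * ?X + (1 - b) * ?Y"
      using hb_nonneg[OF f c0(2) b1 a(1) a1] unfolding p1 p2
      by (subst (asm) fgen_finite[OF f x], subst (asm) fgen_finite[OF f y]) simp
    have "c * real_of_ereal (f (a / c)) + (1 - c) * real_of_ereal (f ((1 - a) / (1 - c)))
          \<le> (1 - l) * (b * ?X + (1 - b) * ?Y)" using r1 r2 by (simp add: algebra_simps)
    also have "\<dots> \<le> b * ?X + (1 - b) * ?Y" using nn l by (simp add: mult_left_le_one_le)
    finally have fin: "c * real_of_ereal (f (a / c)) + (1 - c) * real_of_ereal (f ((1 - a) / (1 - c)))
          \<le> b * ?X + (1 - b) * ?Y" .
    show ?thesis unfolding p1 p2 q1 q2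
      using fin
      by (subst fgen_finite[OF f x], subst fgen_finite[OF f y],
          subst fgen_finite[OF f h1[THEN conjunct1]], subst fgen_finite[OF f h2[THEN conjunct1]]) simp
  next
    case False
    hence "f (a / b) = \<infinity> \<or> f ((1 - a) / (1 - b)) = \<infinity>" by auto
    hence "persp f b a = \<infinity> \<or> persp f (1 - b) (1 - a) = \<infinity>" unfolding p1 p2 using c0 b1 by auto
    note disj = this
    have A: "persp f b a \<noteq> -\<infinity>" unfolding p1 using c0 b1 nm by (auto simp: ereal_mult_eq_MInfty)
    have B: "persp f (1 - b) (1 - a) \<noteq> -\<infinity>" unfolding p2 using c0 b1 nm by (auto simp: ereal_mult_eq_MInfty)
    have "persp f b a + persp f (1 - b) (1 - a) = \<infinity>"
      using disj A B by (cases "persp f b a"; cases "persp f (1 - b) (1 - a)") auto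
    thus ?thesis by (metis ereal_less_eq(1))
  qed
qed

lemma hb_self:
  assumes f: "fdiv_generator f" and b: "0 \<le> b" "b \<le> 1"
  shows "persp f b b + persp f (1 - b) (1 - b) = 0"
  using b fgen_basic(1)[OF f] by (auto simp: persp_def)

lemma g_fun_props:
  assumes f: "fdiv_generator f" and b: "0 \<le> b" "b \<le> 1" and r: "0 \<le> r"
  shows "0 \<le> g_fun f r b" "g_fun f r b \<le> b"
    "\<And>z. 0 \<le> z \<Longrightarrow> z \<le> 1 \<Longrightarrow> persp f b z + persp f (1 - b) (1 - z) \<le> ereal r \<Longrightarrow> g_fun f r b \<le> z"
proof -
  let ?S = "{z\<in>{0..1}. persp f b z + persp f (1 - b) (1 - z) \<le> ereal r}"
  have g: "g_fun f r b = Inf ?S" using b by (simp add: g_fun_def)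
  have bS: "b \<in> ?S" using b r hb_self[OF f b] by simp
  have bdd: "bdd_below ?S" by (auto simp: bdd_below_def)
  show "0 \<le> g_fun f r b" unfolding g using bS by (intro cInf_greatest) auto
  show "g_fun f r b \<le> b" unfolding g using bS bdd by (rule cInf_lower)
  fix z assume "0 \<le> z" "z \<le> 1" "persp f b z + persp f (1 - b) (1 - z) \<le> ereal r"
  hence "z \<in> ?S" by simp
  thus "g_fun f r b \<le> z" unfolding g using bdd by (rule cInf_lower)
qed

lemma g_inv_bounds:
  assumes f: "fdiv_generator f" and r: "0 \<le> r" and \<alpha>: "0 < \<alpha>" "\<alpha> < 1"
  shows "1 - \<alpha> \<le> g_inv f r (1 - \<alpha>)" "g_inv f r (1 - \<alpha>) \<le> 1"
proof -
  let ?S = "{\<beta>\<in>{0..1}. g_fun f r \<beta> \<le> 1 - \<alpha>}"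
  have mem: "1 - \<alpha> \<in> ?S" using g_fun_props(2)[OF f _ _ r, of "1 - \<alpha>"] \<alpha> by simp
  have bdd: "bdd_above ?S" by (auto simp: bdd_above_def)
  show "1 - \<alpha> \<le> g_inv f r (1 - \<alpha>)" unfolding g_inv_def using mem bdd by (rule cSup_upper)
  show "g_inv f r (1 - \<alpha>) \<le> 1" unfolding g_inv_def by (rule cSup_least) (use mem in blast, auto)
qed


lemma integrable_ind_mult:
  fixes g :: "'a \<Rightarrow> real"
  shows "A \<in> sets Q \<Longrightarrow> integrable Q g \<Longrightarrow> integrable Q (\<lambda>x. indicator A x * g x)"
  using integrable_real_mult_indicator[of A Q g] by (simp add: mult.commute)

lemma AE_set_zero:
  fixes g :: "'a \<Rightarrow> real"
  assumes fm: "finite_measure Q" and A: "A \<in> sets Q" and g: "integrable Q g"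
    and nn: "AE x in Q. x \<in> A \<longrightarrow> 0 \<le> g x"
    and z: "(\<integral>x. indicator A x * g x \<partial>Q) = 0"
  shows "AE x in Q. x \<in> A \<longrightarrow> g x = 0"
proof -
  have i: "integrable Q (\<lambda>x. indicator A x * g x)"
    using g A by (intro integrable_ind_mult) auto
  have "AE x in Q. indicator A x * g x = 0"
    using integral_nonneg_eq_0_iff_AE[OF i] z nn by (auto elim!: AE_mp simp: indicator_def)
  thus ?thesis by eventually_elim (auto simp: indicator_def)
qed

lemma AE_pos_ex:
  assumes A: "A \<in> sets Q" and pos: "measure Q A > 0" and ae: "AE x in Q. x \<in> A \<longrightarrow> P x"
  shows "\<exists>x\<in>A. P x"
proof (rule ccontr)
  assume n: "\<not> (\<exists>x\<in>A. P x)"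
  have "AE x in Q. x \<notin> A" using ae by eventually_elim (use n in auto)
  hence "A \<in> null_sets Q" using AE_iff_null_sets[OF A] by simp
  thus False using pos by (simp add: measure_def emeasure_eq_0_AE null_setsD1)
qed

lemma jensen_set:
  fixes Q :: "'a measure" and r :: "'a \<Rightarrow> real"
  assumes f: "fdiv_generator f" and fm: "finite_measure Q"
    and r: "integrable Q r" and fin: "AE x in Q. f (r x) < \<infinity>"
    and phi: "integrable Q (\<lambda>x. real_of_ereal (f (r x)))"
    and A: "A \<in> sets Q" and b: "measure Q A > 0"
  defines "p \<equiv> (\<integral>x. indicator A x * r x \<partial>Q)"
  shows "f (p / measure Q A) < \<infinity> \<and>
     measure Q A * real_of_ereal (f (p / measure Q A)) \<le> (\<integral>x. indicator A x * real_of_ereal (f (r x)) \<partial>Q)"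
proof -
  define b where "b = measure Q A"
  define c where "c = p / b"
  define F where "F = (\<lambda>t. real_of_ereal (f t))"
  have b0: "b > 0" using b by (simp add: b_def)
  have pcb: "p = c * b" using b0 by (simp add: c_def)
  have ir: "integrable Q (\<lambda>x. indicator A x * r x)"
    using r A by (intro integrable_ind_mult) auto
  have iphi: "integrable Q (\<lambda>x. indicator A x * F (r x))"
    using phi A unfolding F_def by (intro integrable_ind_mult) auto
  have iA: "integrable Q (indicator A :: 'a \<Rightarrow> real)"
    using A fm by (intro integrable_real_indicator) (use finite_measure.emeasure_finite[OF fm, of A] in \<open>auto simp: top.not_eq_extremum\<close>)
  have intA: "(\<integral>x. indicator A x \<partial>Q) = b" using A by (simp add: b_def)
  have goal: "f c < \<infinity> \<and> b * F c \<le> (\<integral>x. indicator A x * F (r x) \<partial>Q)"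
  proof (cases "\<exists>u v. f u < \<infinity> \<and> f v < \<infinity> \<and> u < c \<and> c < v")
    case True
    then obtain u v where uv: "f u < \<infinity>" "f v < \<infinity>" "u < c" "c < v" by blast
    from fgen_support[OF f uv] obtain k where fc: "f c < \<infinity>"
      and k: "\<And>t. f t < \<infinity> \<Longrightarrow> F t \<ge> F c + k * (t - c)" unfolding F_def by blast
    have "(\<integral>x. indicator A x * (F c + k * (r x - c)) \<partial>Q) \<le> (\<integral>x. indicator A x * F (r x) \<partial>Q)"
    proof (rule integral_mono_AE)
      show "integrable Q (\<lambda>x. indicator A x * (F c + k * (r x - c)))"
        using iA ir by (simp add: algebra_simps)
      show "integrable Q (\<lambda>x. indicator A x * F (r x))" by (rule iphi)
      show "AE x in Q. indicator A x * (F c + k * (r x - c)) \<le> indicator A x * F (r x)"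
        using fin by eventually_elim (auto simp: indicator_def k)
    qed
    moreover have "(\<integral>x. indicator A x * (F c + k * (r x - c)) \<partial>Q) = b * F c"
    proof -
      have "(\<integral>x. indicator A x * (F c + k * (r x - c)) \<partial>Q)
          = (\<integral>x. (F c - k * c) * indicator A x + k * (indicator A x * r x) \<partial>Q)"
        by (intro Bochner_Integration.integral_cong) (auto simp: algebra_simps)
      also have "\<dots> = (F c - k * c) * b + k * p"
        using iA ir intA by (simp add: p_def)
      finally show ?thesis by (simp add: pcb algebra_simps)
    qed
    ultimately show ?thesis using fc by simp
  next
    case False
    hence side: "(\<forall>v. f v < \<infinity> \<longrightarrow> v \<le> c) \<or> (\<forall>u. f u < \<infinity> \<longrightarrow> c \<le> u)"
      by (meson not_le)
    have "AE x in Q. x \<in> A \<longrightarrow> r x = c"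
      using side
    proof
      assume s: "\<forall>v. f v < \<infinity> \<longrightarrow> v \<le> c"
      have "AE x in Q. x \<in> A \<longrightarrow> c - r x = 0"
      proof (rule AE_set_zero[OF fm A])
        show "integrable Q (\<lambda>x. c - r x)" using r fm by (intro Bochner_Integration.integrable_diff) (auto simp: finite_measure.integrable_const)
        show "AE x in Q. x \<in> A \<longrightarrow> 0 \<le> c - r x" using fin by eventually_elim (use s in auto)
        have "(\<integral>x. indicator A x * (c - r x) \<partial>Q) = (\<integral>x. c * indicator A x - indicator A x * r x \<partial>Q)"
          by (intro Bochner_Integration.integral_cong) (auto simp: algebra_simps)
        also have "\<dots> = c * b - p" using iA ir intA by (simp add: p_def)
        finally show "(\<integral>x. indicator A x * (c - r x) \<partial>Q) = 0" by (simp add: pcb)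
      qed
      thus ?thesis by eventually_elim auto
    next
      assume s: "\<forall>u. f u < \<infinity> \<longrightarrow> c \<le> u"
      have "AE x in Q. x \<in> A \<longrightarrow> r x - c = 0"
      proof (rule AE_set_zero[OF fm A])
        show "integrable Q (\<lambda>x. r x - c)" using r fm by (intro Bochner_Integration.integrable_diff) (auto simp: finite_measure.integrable_const)
        show "AE x in Q. x \<in> A \<longrightarrow> 0 \<le> r x - c" using fin by eventually_elim (use s in auto)
        have "(\<integral>x. indicator A x * (r x - c) \<partial>Q) = (\<integral>x. indicator A x * r x - c * indicator A x \<partial>Q)"
          by (intro Bochner_Integration.integral_cong) (auto simp: algebra_simps)
        also have "\<dots> = p - c * b" using iA ir intA by (simp add: p_def)
        finally show "(\<integral>x. indicator A x * (r x - c) \<partial>Q) = 0" by (simp add: pcb)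
      qed
      thus ?thesis by eventually_elim auto
    qed
    note ae = this
    have "AE x in Q. x \<in> A \<longrightarrow> r x = c \<and> f (r x) < \<infinity>" using ae fin by eventually_elim auto
    from AE_pos_ex[OF A b this] have fc: "f c < \<infinity>" by auto
    have "(\<integral>x. indicator A x * F (r x) \<partial>Q) = (\<integral>x. F c * indicator A x \<partial>Q)"
    proof (rule integral_cong_AE)
      show "(\<lambda>x. indicator A x * F (r x)) \<in> borel_measurable Q" using iphi by (rule borel_measurable_integrable)
      show "(\<lambda>x. F c * indicator A x) \<in> borel_measurable Q"
        using iA by (intro borel_measurable_integrable) simp
      show "AE x in Q. indicator A x * F (r x) = F c * indicator A x"
        using ae by eventually_elim (auto simp: indicator_def)
    qed
    also have "\<dots> = F c * b" using intA by simp
    finally show ?thesis using fc by simp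
  qed
  thus ?thesis unfolding c_def b_def F_def by simp
qed


lemma enn2ereal_fin: "x \<noteq> \<top> \<Longrightarrow> enn2ereal x = ereal (enn2real x)"
  by (metis enn2ereal_ennreal enn2real_nonneg ennreal_enn2real_if)

lemma fdiv_real:
  fixes P Q :: "'a measure"
  assumes f: "fdiv_generator f" and P: "prob_space P" and Q: "prob_space Q"
    and sets: "sets P = sets Q" and ac: "absolutely_continuous Q P"
    and nf: "fdiv f P Q \<noteq> \<infinity>"
  defines "r \<equiv> (\<lambda>x. enn2real (RN_deriv Q P x))"
  shows "integrable Q r" "\<And>A. A \<in> sets Q \<Longrightarrow> (\<integral>x. indicator A x * r x \<partial>Q) = measure P A"
    "AE x in Q. f (r x) < \<infinity>" "integrable Q (\<lambda>x. real_of_ereal (f (r x)))"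
    "fdiv f P Q = ereal (\<integral>x. real_of_ereal (f (r x)) \<partial>Q)"
proof -
  have sfQ: "sigma_finite_measure Q" and sfP: "sigma_finite_measure P"
    using P Q by (auto simp: prob_space_imp_sigma_finite)
  have fmQ: "finite_measure Q" using Q by (simp add: prob_space_def)
  have dens: "density Q (RN_deriv Q P) = P"
    using sigma_finite_measure.density_RN_deriv[OF sfQ ac sets] .
  have RNfin: "AE x in Q. RN_deriv Q P x \<noteq> \<infinity>"
    using sigma_finite_measure.RN_deriv_finite[OF sfQ sfP ac sets] .
  have RNeq: "AE x in Q. RN_deriv Q P x = ennreal (r x)"
    using RNfin by eventually_elim (auto simp: r_def ennreal_enn2real_if)
  have rm[measurable]: "r \<in> borel_measurable Q" unfolding r_def by measurable
  have r0: "\<And>x. 0 \<le> r x" unfolding r_def by simp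
  have emP: "emeasure P A = (\<integral>\<^sup>+x. ennreal (indicator A x * r x) \<partial>Q)" if A: "A \<in> sets Q" for A
  proof -
    have "emeasure P A = emeasure (density Q (RN_deriv Q P)) A" by (simp add: dens)
    also have "\<dots> = (\<integral>\<^sup>+x. RN_deriv Q P x * indicator A x \<partial>Q)"
      using A by (simp add: emeasure_density)
    also have "\<dots> = (\<integral>\<^sup>+x. ennreal (indicator A x * r x) \<partial>Q)"
      by (rule nn_integral_cong_AE) (use RNeq in \<open>eventually_elim, auto simp: indicator_def\<close>)
    finally show ?thesis .
  qed
  have "emeasure P (space Q) = (\<integral>\<^sup>+x. ennreal (r x) \<partial>Q)"
    using emP[of "space Q"] by (simp add: indicator_def cong: nn_integral_cong)
  hence intr: "(\<integral>\<^sup>+x. ennreal (r x) \<partial>Q) < \<infinity>"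
    using prob_space.emeasure_space_1[OF P] sets_eq_imp_space_eq[OF sets] by simp
  show ir: "integrable Q r" using r0 intr by (intro integrableI_nonneg) auto
  show irA: "(\<integral>x. indicator A x * r x \<partial>Q) = measure P A" if A: "A \<in> sets Q" for A
  proof -
    have i: "integrable Q (\<lambda>x. indicator A x * r x)" using A ir by (intro integrable_ind_mult)
    have "emeasure P A = ennreal (\<integral>x. indicator A x * r x \<partial>Q)"
      unfolding emP[OF A] using i r0 by (intro nn_integral_eq_integral) auto
    moreover have "0 \<le> (\<integral>x. indicator A x * r x \<partial>Q)" using r0 by (intro Bochner_Integration.integral_nonneg) auto
    ultimately show ?thesis by (simp add: measure_def)
  qed
  define G where "G = (\<integral>\<^sup>+ x. e2ennreal (f (r x)) \<partial>Q)"
  define H where "H = (\<integral>\<^sup>+ x. e2ennreal (- f (r x)) \<partial>Q)"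
  have fd: "fdiv f P Q = enn2ereal G - enn2ereal H"
    using ac sets unfolding fdiv_def G_def H_def r_def Let_def by simp
  have fm[measurable]: "f \<in> borel_measurable borel" by (rule fgen_measurable[OF f])
  have Gm: "(\<lambda>x. e2ennreal (f (r x))) \<in> borel_measurable Q"
    by (intro measurable_compose[OF _ measurable_e2ennreal] measurable_compose[OF rm fm])
  have Gfin: "G \<noteq> \<top>"
  proof
    assume "G = \<top>" hence "fdiv f P Q = \<infinity>" using fd by simp
    thus False using nf by simp
  qed
  have "AE x in Q. e2ennreal (f (r x)) \<noteq> \<infinity>"
    using nn_integral_PInf_AE[OF Gm] Gfin unfolding G_def by simp
  thus finr: "AE x in Q. f (r x) < \<infinity>"
    by eventually_elim (auto simp: less_top[symmetric])
  obtain c0 k0 where ck: "\<And>t. f t < \<infinity> \<Longrightarrow> real_of_ereal (f t) \<ge> c0 + k0 * t"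
    using fgen_minorant[OF f] by blast
  define \<phi> where "\<phi> = (\<lambda>x. real_of_ereal (f (r x)))"
  have phim[measurable]: "\<phi> \<in> borel_measurable Q" unfolding \<phi>_def by measurable
  have feq: "AE x in Q. f (r x) = ereal (\<phi> x)"
    using finr by eventually_elim (auto simp: \<phi>_def intro: fgen_finite[OF f])
  have G': "G = (\<integral>\<^sup>+ x. ennreal (\<phi> x) \<partial>Q)"
    unfolding G_def by (rule nn_integral_cong_AE) (use feq in \<open>eventually_elim, auto simp: e2ennreal_ereal\<close>)
  have H': "H = (\<integral>\<^sup>+ x. ennreal (- \<phi> x) \<partial>Q)"
    unfolding H_def by (rule nn_integral_cong_AE) (use feq in \<open>eventually_elim, auto simp: e2ennreal_ereal\<close>)
  have ib: "integrable Q (\<lambda>x. \<bar>c0\<bar> + \<bar>k0\<bar> * r x)"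
    using ir fmQ by (auto simp: finite_measure.integrable_const)
  have "(\<integral>\<^sup>+ x. ennreal (norm (\<phi> x)) \<partial>Q) \<le> (\<integral>\<^sup>+ x. ennreal (\<phi> x) + ennreal (\<bar>c0\<bar> + \<bar>k0\<bar> * r x) \<partial>Q)"
  proof (rule nn_integral_mono_AE)
    show "AE x in Q. ennreal (norm (\<phi> x)) \<le> ennreal (\<phi> x) + ennreal (\<bar>c0\<bar> + \<bar>k0\<bar> * r x)"
      using finr
    proof eventually_elim
      case (elim x)
      have lb: "\<phi> x \<ge> c0 + k0 * r x" using ck[OF elim] by (simp add: \<phi>_def)
      have "k0 * r x \<ge> - (\<bar>k0\<bar> * r x)" 
      proof -
        have "\<bar>k0 * r x\<bar> = \<bar>k0\<bar> * r x" using r0[of x] by (simp add: abs_mult)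
        thus ?thesis using abs_ge_minus_self[of "k0 * r x"] by linarith
      qed
      hence b2: "- \<phi> x \<le> \<bar>c0\<bar> + \<bar>k0\<bar> * r x" using lb by linarith
      have nn: "0 \<le> \<bar>c0\<bar> + \<bar>k0\<bar> * r x" using r0[of x] by simp
      show ?case
      proof (cases "\<phi> x \<ge> 0")
        case True thus ?thesis using nn by (simp add: ennreal_plus[symmetric] del: ennreal_plus)
      next
        case False
        hence "ennreal (norm (\<phi> x)) = ennreal (- \<phi> x)" by simp
        also have "\<dots> \<le> ennreal (\<bar>c0\<bar> + \<bar>k0\<bar> * r x)" using b2 by (rule ennreal_leI)
        finally show ?thesis by (simp add: add_increasing)
      qed
    qed
  qed
  also have "\<dots> = G + (\<integral>\<^sup>+ x. ennreal (\<bar>c0\<bar> + \<bar>k0\<bar> * r x) \<partial>Q)"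
    unfolding G' by (intro nn_integral_add) auto
  also have "\<dots> < \<infinity>"
    using Gfin nn_integral_eq_integral[OF ib] r0 by (simp add: less_top)
  finally have "(\<integral>\<^sup>+ x. ennreal (norm (\<phi> x)) \<partial>Q) < \<infinity>" .
  hence iphi: "integrable Q \<phi>" using phim by (simp add: integrable_iff_bounded)
  thus "integrable Q (\<lambda>x. real_of_ereal (f (r x)))" by (simp add: \<phi>_def)
  have Hfin: "H \<noteq> \<top>"
  proof -
    have "H \<le> (\<integral>\<^sup>+ x. ennreal (norm (\<phi> x)) \<partial>Q)" unfolding H'
      by (intro nn_integral_mono) (auto intro: ennreal_leI)
    also have "\<dots> < \<infinity>" using iphi by (simp add: integrable_iff_bounded)
    finally show ?thesis by simp
  qed
  have "(\<integral>x. \<phi> x \<partial>Q) = enn2real G - enn2real H"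
    unfolding G' H' by (rule real_lebesgue_integral_def[OF iphi])
  thus "fdiv f P Q = ereal (\<integral>x. real_of_ereal (f (r x)) \<partial>Q)"
    unfolding fd enn2ereal_fin[OF Gfin] enn2ereal_fin[OF Hfin] by (simp add: \<phi>_def)
qed


lemma fdiv_nonneg:
  fixes P Q :: "'a measure"
  assumes f: "fdiv_generator f" and P: "prob_space P" and Q: "prob_space Q"
    and sets: "sets P = sets Q"
  shows "0 \<le> fdiv f P Q"
proof (cases "absolutely_continuous Q P \<and> fdiv f P Q \<noteq> \<infinity>")
  case False
  thus ?thesis using sets by (auto simp: fdiv_def)
next
  case True
  hence ac: "absolutely_continuous Q P" and nf: "fdiv f P Q \<noteq> \<infinity>" by auto
  note R = fdiv_real[OF f P Q sets ac nf]
  define r where "r = (\<lambda>x. enn2real (RN_deriv Q P x))"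
  have fmQ: "finite_measure Q" using Q by (simp add: prob_space_def)
  have sp: "space Q \<in> sets Q" by simp
  have m1: "measure Q (space Q) = 1" using Q by (simp add: prob_space.prob_space)
  have "measure P (space Q) = 1" using prob_space.prob_space[OF P] sets_eq_imp_space_eq[OF sets] by simp
  hence p1: "(\<integral>x. indicator (space Q) x * r x \<partial>Q) = 1" using R(2)[OF sp] unfolding r_def by simp
  have J: "f (1 / 1) < \<infinity> \<and> 1 * real_of_ereal (f (1 / 1)) \<le> (\<integral>x. indicator (space Q) x * real_of_ereal (f (r x)) \<partial>Q)"
    using jensen_set[OF f fmQ R(1) R(3) R(4) sp] m1 p1 unfolding r_def by simp
  have "(\<integral>x. indicator (space Q) x * real_of_ereal (f (r x)) \<partial>Q) = (\<integral>x. real_of_ereal (f (r x)) \<partial>Q)"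
    by (intro Bochner_Integration.integral_cong) auto
  hence "0 \<le> (\<integral>x. real_of_ereal (f (r x)) \<partial>Q)" using J fgen_basic(1)[OF f] by simp
  thus ?thesis using R(5) unfolding r_def by simp
qed

lemma fdiv_binary:
  fixes P Q :: "'a measure"
  assumes f: "fdiv_generator f" and P: "prob_space P" and Q: "prob_space Q"
    and sets: "sets P = sets Q" and A: "A \<in> sets Q"
    and b: "0 < measure Q A" "measure Q A < 1"
  shows "persp f (measure Q A) (measure P A) + persp f (1 - measure Q A) (1 - measure P A) \<le> fdiv f P Q"
proof (cases "absolutely_continuous Q P \<and> fdiv f P Q \<noteq> \<infinity>")
  case False
  thus ?thesis using sets by (auto simp: fdiv_def)
next
  case True
  hence ac: "absolutely_continuous Q P" and nf: "fdiv f P Q \<noteq> \<infinity>" by auto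
  note R = fdiv_real[OF f P Q sets ac nf]
  define r where "r = (\<lambda>x. enn2real (RN_deriv Q P x))"
  define \<phi> where "\<phi> = (\<lambda>x. real_of_ereal (f (r x)))"
  have fmQ: "finite_measure Q" using Q by (simp add: prob_space_def)
  have A': "space Q - A \<in> sets Q" using A by auto
  have mA': "measure Q (space Q - A) = 1 - measure Q A"
    using prob_space.prob_compl[OF Q A] .
  have pA': "measure P (space Q - A) = 1 - measure P A"
    using prob_space.prob_compl[OF P, of A] A sets sets_eq_imp_space_eq[OF sets] by simp
  have b': "0 < measure Q (space Q - A)" using mA' b by simp
  note J1 = jensen_set[OF f fmQ R(1) R(3) R(4) A b(1), folded r_def \<phi>_def, unfolded R(2)[OF A]]
  note J2 = jensen_set[OF f fmQ R(1) R(3) R(4) A' b', folded r_def \<phi>_def, unfolded R(2)[OF A'] mA' pA']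
  have iphi: "integrable Q \<phi>" using R(4) unfolding \<phi>_def r_def .
  have split: "(\<integral>x. \<phi> x \<partial>Q) = (\<integral>x. indicator A x * \<phi> x \<partial>Q) + (\<integral>x. indicator (space Q - A) x * \<phi> x \<partial>Q)"
  proof -
    have "(\<integral>x. \<phi> x \<partial>Q) = (\<integral>x. indicator A x * \<phi> x + indicator (space Q - A) x * \<phi> x \<partial>Q)"
      by (intro Bochner_Integration.integral_cong) (auto simp: indicator_def)
    also have "\<dots> = (\<integral>x. indicator A x * \<phi> x \<partial>Q) + (\<integral>x. indicator (space Q - A) x * \<phi> x \<partial>Q)"
      using iphi A A' by (intro Bochner_Integration.integral_add integrable_ind_mult) auto
    finally show ?thesis .
  qed
  let ?a = "measure P A" and ?b = "measure Q A"
  obtain y1 where y1: "f (?a / ?b) = ereal y1"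
    using J1 fgen_basic(3)[OF f, of "?a / ?b"] by (cases "f (?a / ?b)") auto
  obtain y2 where y2: "f ((1 - ?a) / (1 - ?b)) = ereal y2"
    using J2 fgen_basic(3)[OF f, of "(1 - ?a) / (1 - ?b)"] by (cases "f ((1 - ?a) / (1 - ?b))") auto
  have "persp f ?b ?a + persp f (1 - ?b) (1 - ?a) = ereal (?b * y1 + (1 - ?b) * y2)"
    using b by (simp add: persp_def y1 y2)
  also have "\<dots> \<le> ereal (\<integral>x. \<phi> x \<partial>Q)" using J1 J2 split by (simp add: y1 y2 \<phi>_def r_def)
  also have "\<dots> = fdiv f P Q" using R(5) unfolding \<phi>_def r_def by simp
  finally show ?thesis .
qed


lemma cdf_point:
  fixes D :: "real measure"
  assumes D: "real_distribution D" and b: "0 < \<beta>" "\<beta> < 1"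
  shows "\<exists>c. measure D {..c} \<ge> \<beta> \<and> measure D {..<c} \<le> \<beta>"
proof -
  interpret real_distribution D by (rule D)
  define A where "A = {q. cdf D q \<ge> \<beta>}"
  have "eventually (\<lambda>q. cdf D q > \<beta>) at_top"
    using cdf_lim_at_top_prob b by (intro order_tendstoD) auto
  then obtain q1 where "\<And>q. q \<ge> q1 \<Longrightarrow> cdf D q > \<beta>" by (auto simp: eventually_at_top_linorder)
  hence Ane: "A \<noteq> {}" unfolding A_def by (metis less_imp_le mem_Collect_eq order_refl empty_iff)
  have "eventually (\<lambda>q. cdf D q < \<beta>) at_bot"
    using cdf_lim_at_bot b by (intro order_tendstoD) auto
  then obtain q0 where q0: "\<And>q. q \<le> q0 \<Longrightarrow> cdf D q < \<beta>" by (auto simp: eventually_at_bot_linorder)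
  have bdd: "bdd_below A" unfolding A_def bdd_below_def
  proof (rule exI[of _ q0], safe)
    fix q assume "\<beta> \<le> cdf D q"
    thus "q0 \<le> q" using q0[of q] by (cases "q \<le> q0") auto
  qed
  define c where "c = Inf A"
  have below: "\<And>q. q < c \<Longrightarrow> cdf D q < \<beta>"
  proof -
    fix q assume "q < c"
    hence "q \<notin> A" unfolding c_def using bdd cInf_lower not_le by blast
    thus "cdf D q < \<beta>" unfolding A_def by simp
  qed
  have ev: "eventually (\<lambda>y. \<beta> \<le> cdf D y) (at_right c)"
  proof -
    have "\<beta> \<le> cdf D y" if yc: "y > c" for y
    proof -
      obtain q where "q \<in> A" "q < y" using cInf_lessD[OF Ane, of y] yc unfolding c_def by blast
      thus ?thesis unfolding A_def using cdf_nondecreasing[of q y] by auto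
    qed
    hence "\<forall>y. y \<noteq> c \<longrightarrow> y \<in> {c<..} \<longrightarrow> \<beta> \<le> cdf D y" by auto
    thus ?thesis unfolding eventually_at_filter by (intro always_eventually)
  qed
  have lim: "(cdf D \<longlongrightarrow> cdf D c) (at_right c)"
    using cdf_is_right_cont[of c] by (simp add: continuous_within)
  have c1: "\<beta> \<le> cdf D c"
    by (rule tendsto_lowerbound[OF lim ev]) simp
  define U where "U = (\<lambda>n::nat. {..c - 1 / Suc n})"
  have inc: "incseq U" unfolding U_def incseq_def
    by (auto simp: frac_le intro!: order_trans[of _ "c - 1 / Suc _"] elim!: order_trans) 
  have un: "(\<Union>n. U n) = {..<c}"
  proof safe
    fix x n assume "x \<in> U n" thus "x < c" unfolding U_def by (auto intro: le_less_trans)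
  next
    fix x assume "x < c"
    hence "0 < c - x" by simp
    from reals_Archimedean[OF this] obtain n where "inverse (real (Suc n)) < c - x" by blast
    hence "1 / Suc n < c - x" by (simp add: inverse_eq_divide)
    hence "x \<in> U n" unfolding U_def by simp
    thus "x \<in> (\<Union>n. U n)" by blast
  qed
  have "(\<lambda>n. measure D (U n)) \<longlonglongrightarrow> measure D (\<Union>n. U n)"
    using inc by (intro finite_Lim_measure_incseq) (auto simp: U_def)
  hence lim2: "(\<lambda>n. measure D (U n)) \<longlonglongrightarrow> measure D {..<c}" by (simp add: un)
  have "\<And>n. measure D (U n) \<le> \<beta>"
    using below unfolding U_def cdf_def2[symmetric] by (intro less_imp_le) simp
  hence c2: "measure D {..<c} \<le> \<beta>"
    using lim2 by (intro tendsto_upperbound[of _ _ sequentially]) (auto intro: always_eventually)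
  show ?thesis using c1 c2 by (auto simp: cdf_def2)
qed


lemma hoeff_bad:
  fixes M :: "'w measure" and V :: "nat \<Rightarrow> 'w \<Rightarrow> real" and D :: "real measure"
  assumes M: "prob_space M" and n: "n > 0"
    and ind: "prob_space.indep_vars M (\<lambda>_. borel) V {..<n}"
    and dist: "\<And>j. j < n \<Longrightarrow> distr M borel (V j) = D"
    and pc: "measure D {..<c} \<le> \<beta> - \<epsilon>" and e: "\<epsilon> \<ge> 0"
  shows "measure M {w\<in>space M. real n * \<beta> \<le> (\<Sum>j<n. indicator {..<c} (V j w))}
           \<le> exp (- 2 * real n * \<epsilon>\<^sup>2)"
proof -
  interpret prob_space M by (rule M)
  define X where "X = (\<lambda>j w. indicator {..<c} (V j w) :: real)"
  have indX: "indep_vars (\<lambda>_. borel) X {..<n}"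
    unfolding X_def by (rule indep_vars_compose2[OF ind]) simp
  have Vm: "\<And>j. j < n \<Longrightarrow> random_variable borel (V j)"
    using ind unfolding indep_vars_def by auto
  have EX: "expectation (X j) = measure D {..<c}" if j: "j < n" for j
  proof -
    have "expectation (X j) = (\<integral>x. indicator {..<c} x \<partial>distr M borel (V j))"
      unfolding X_def using Vm[OF j] by (subst integral_distr) auto
    also have "\<dots> = measure D {..<c}"
    proof -
      have sp: "space D = UNIV" using dist[OF j] by (metis space_distr space_borel)
      show ?thesis using dist[OF j] sp by simp
    qed
    finally show ?thesis .
  qed
  interpret H: Hoeffding_ineq M "{..<n}" X "\<lambda>_. 0" "\<lambda>_. 1" "\<Sum>j\<in>{..<n}. expectation (X j)"
  proof unfold_locales
    show "finite {..<n}" by simp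
    show "indep_vars (\<lambda>_. borel) X {..<n}" by (rule indX)
  next
    fix i assume "i \<in> {..<n}"
    show "AE x in M. X i x \<in> {0..1}" unfolding X_def by (intro AE_I2) (simp add: indicator_def)
  qed
  have mu: "(\<Sum>j\<in>{..<n}. expectation (X j)) = real n * measure D {..<c}" using EX by simp
  have "prob {w\<in>space M. (\<Sum>j\<in>{..<n}. X j w) \<ge> (\<Sum>j\<in>{..<n}. expectation (X j)) + real n * \<epsilon>}
        \<le> exp (-2 * (real n * \<epsilon>)\<^sup>2 / (\<Sum>j\<in>{..<n}. (1 - 0)\<^sup>2))"
    using n e by (intro H.Hoeffding_ineq_ge) auto
  also have "\<dots> = exp (- 2 * real n * \<epsilon>\<^sup>2)" using n by (simp add: power2_eq_square)
  finally have h: "prob {w\<in>space M. (\<Sum>j\<in>{..<n}. X j w) \<ge> real n * measure D {..<c} + real n * \<epsilon>}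
        \<le> exp (- 2 * real n * \<epsilon>\<^sup>2)" unfolding mu .
  have "prob {w\<in>space M. real n * \<beta> \<le> (\<Sum>j<n. indicator {..<c} (V j w))}
      \<le> prob {w\<in>space M. (\<Sum>j\<in>{..<n}. X j w) \<ge> real n * measure D {..<c} + real n * \<epsilon>}"
  proof (rule finite_measure_mono)
    have "real n * measure D {..<c} + real n * \<epsilon> \<le> real n * \<beta>"
      using pc by (simp add: distrib_left[symmetric] mult_left_mono)
    thus "{w\<in>space M. real n * \<beta> \<le> (\<Sum>j<n. indicator {..<c} (V j w))}
      \<subseteq> {w\<in>space M. (\<Sum>j\<in>{..<n}. X j w) \<ge> real n * measure D {..<c} + real n * \<epsilon>}"
      unfolding X_def by auto
    show "{w\<in>space M. (\<Sum>j\<in>{..<n}. X j w) \<ge> real n * measure D {..<c} + real n * \<epsilon>} \<in> events"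
      unfolding X_def using Vm by measurable
  qed
  with h show ?thesis by linarith
qed


definition Fh :: "(nat \<Rightarrow> nat) \<Rightarrow> (nat \<times> nat \<Rightarrow> real) \<Rightarrow> nat \<Rightarrow> real \<Rightarrow> real" where
  "Fh m x i q = (1 / real (m i)) * (\<Sum>j<m i. indicator {..q} (x (i, j)))"

definition Fm :: "nat \<Rightarrow> (nat \<Rightarrow> nat) \<Rightarrow> (nat \<times> nat \<Rightarrow> real) \<Rightarrow> real \<Rightarrow> real" where
  "Fm d m x q = Min ((\<lambda>i. Fh m x i q) ` {..<d})"

lemma Fm_ge: "d > 0 \<Longrightarrow> (\<beta> \<le> Fm d m x q) \<longleftrightarrow> (\<forall>i<d. \<beta> \<le> Fh m x i q)"
  unfolding Fm_def by (subst Min_ge_iff) auto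

lemma Fh_one:
  assumes "m i > 0" "\<And>j. j < m i \<Longrightarrow> x (i, j) \<le> q"
  shows "Fh m x i q = 1"
proof -
  have "(\<Sum>j<m i. indicator {..q} (x (i, j)) :: real) = (\<Sum>j<m i. 1)"
    using assms(2) by (intro sum.cong) auto
  thus ?thesis using assms(1) by (simp add: Fh_def)
qed

lemma Fh_zero:
  assumes "\<And>j. j < m i \<Longrightarrow> q < x (i, j)"
  shows "Fh m x i q = 0"
proof -
  have "(\<Sum>j<m i. indicator {..q} (x (i, j)) :: real) = (\<Sum>j<m i. 0)"
    using assms by (intro sum.cong) (auto simp: indicator_def not_le[symmetric])
  thus ?thesis by (simp add: Fh_def)
qed

lemma sum_abs_bound:
  fixes x :: "nat \<times> nat \<Rightarrow> real"
  assumes "i < d" "j < m i"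
  shows "\<bar>x (i, j)\<bar> \<le> (\<Sum>k\<in>(SIGMA i:{..<d}. {..<m i}). \<bar>x k\<bar>)"
  using assms by (intro member_le_sum[where f = "\<lambda>k. \<bar>x k\<bar>"]) (auto intro: finite_SigmaI)

lemma A_ne:
  assumes d: "d > 0" and m: "\<And>i. i < d \<Longrightarrow> m i > 0" and b: "\<beta> \<le> 1"
  shows "{q. \<beta> \<le> Fm d m x q} \<noteq> {}"
proof -
  define B where "B = (\<Sum>k\<in>(SIGMA i:{..<d}. {..<m i}). \<bar>x k\<bar>)"
  have "\<forall>i<d. \<beta> \<le> Fh m x i B"
  proof safe
    fix i assume i: "i < d"
    have "Fh m x i B = 1"
      using m[OF i] sum_abs_bound[OF i, of _ m x] by (intro Fh_one) (auto simp: B_def intro: order_trans[OF abs_ge_self])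
    thus "\<beta> \<le> Fh m x i B" using b by simp
  qed
  thus ?thesis using Fm_ge[OF d] by blast
qed

lemma A_bdd:
  assumes d: "d > 0" and b: "\<beta> > 0"
  shows "bdd_below {q. \<beta> \<le> Fm d m x q}"
proof -
  define B where "B = (\<Sum>k\<in>(SIGMA i:{..<d}. {..<m i}). \<bar>x k\<bar>)"
  have "- B \<le> q" if q: "\<beta> \<le> Fm d m x q" for q
  proof (rule ccontr)
    assume "\<not> - B \<le> q"
    hence qB: "q < - B" by simp
    have "Fh m x 0 q = 0"
    proof (rule Fh_zero)
      fix j assume "j < m 0"
      hence "\<bar>x (0, j)\<bar> \<le> B" using sum_abs_bound[of 0 d j m x] d by (simp add: B_def)
      thus "q < x (0, j)" using qB by linarith
    qed
    moreover have "\<beta> \<le> Fh m x 0 q" using q Fm_ge[OF d] d by blast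
    ultimately show False using b by simp
  qed
  thus ?thesis unfolding bdd_below_def by blast
qed

lemma T_char:
  assumes d: "d > 0" and m: "\<And>i. i < d \<Longrightarrow> m i > 0" and b: "0 < \<beta>" "\<beta> \<le> 1"
  shows "v \<le> quantile \<beta> (Fm d m x) \<longleftrightarrow>
    (\<forall>k\<in>(SIGMA i:{..<d}. {..<m i}). (\<forall>i<d. \<beta> \<le> Fh m x i (x k)) \<longrightarrow> v \<le> x k)"
proof -
  define A where "A = {q. \<beta> \<le> Fm d m x q}"
  have ne: "A \<noteq> {}" unfolding A_def by (rule A_ne[OF d m b(2)])
  have bdd: "bdd_below A" unfolding A_def by (rule A_bdd[OF d b(1)])
  have T: "quantile \<beta> (Fm d m x) = Inf A" unfolding quantile_def A_def by simp
  show ?thesis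
  proof
    assume v: "v \<le> quantile \<beta> (Fm d m x)"
    show "\<forall>k\<in>(SIGMA i:{..<d}. {..<m i}). (\<forall>i<d. \<beta> \<le> Fh m x i (x k)) \<longrightarrow> v \<le> x k"
    proof (intro ballI impI)
      fix k assume "\<forall>i<d. \<beta> \<le> Fh m x i (x k)"
      hence "x k \<in> A" unfolding A_def using Fm_ge[OF d] by blast
      hence "Inf A \<le> x k" using bdd by (rule cInf_lower)
      thus "v \<le> x k" using v T by simp
    qed
  next
    assume H: "\<forall>k\<in>(SIGMA i:{..<d}. {..<m i}). (\<forall>i<d. \<beta> \<le> Fh m x i (x k)) \<longrightarrow> v \<le> x k"
    have "v \<le> Inf A"
    proof (rule cInf_greatest[OF ne])
      fix q assume qA: "q \<in> A"
      hence qi: "\<forall>i<d. \<beta> \<le> Fh m x i q" unfolding A_def using Fm_ge[OF d] by blast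
      define K where "K = {k\<in>(SIGMA i:{..<d}. {..<m i}). x k \<le> q}"
      have finK: "finite K" unfolding K_def by (auto intro: finite_SigmaI)
      have Kne: "K \<noteq> {}"
      proof
        assume "K = {}"
        hence "\<And>j. j < m 0 \<Longrightarrow> q < x (0, j)" unfolding K_def using d by force
        hence "Fh m x 0 q = 0" by (rule Fh_zero)
        thus False using qi d b by force
      qed
      define v0 where "v0 = Max (x ` K)"
      have v0K: "v0 \<in> x ` K" unfolding v0_def using finK Kne by (intro Max_in) auto
      then obtain k0 where k0: "k0 \<in> K" "x k0 = v0" by blast
      have v0q: "v0 \<le> q" using k0 unfolding K_def by auto
      have same: "x k \<le> q \<longleftrightarrow> x k \<le> v0" if "k \<in> (SIGMA i:{..<d}. {..<m i})" for k
      proof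
        assume "x k \<le> q" hence "k \<in> K" using that unfolding K_def by blast
        thus "x k \<le> v0" unfolding v0_def using finK by (intro Max_ge) auto
      qed (use v0q in auto)
      have "Fh m x i v0 = Fh m x i q" if i: "i < d" for i
        unfolding Fh_def using same i by (intro arg_cong2[where f = "(*)"] refl sum.cong) (auto simp: indicator_def)
      hence "\<forall>i<d. \<beta> \<le> Fh m x i (x k0)" using qi k0 by simp
      moreover have "k0 \<in> (SIGMA i:{..<d}. {..<m i})" using k0 unfolding K_def by blast
      ultimately have "v \<le> x k0" using H by blast
      thus "v \<le> q" using k0 v0q by simp
    qed
    thus "v \<le> quantile \<beta> (Fm d m x)" using T by simp
  qed
qed

lemma T_below:
  assumes d: "d > 0" and m: "\<And>i. i < d \<Longrightarrow> m i > 0" and b: "0 < \<beta>" "\<beta> \<le> 1"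
    and lt: "quantile \<beta> (Fm d m x) < c"
  shows "\<exists>q<c. \<forall>i<d. \<beta> \<le> Fh m x i q"
proof -
  define A where "A = {q. \<beta> \<le> Fm d m x q}"
  have ne: "A \<noteq> {}" unfolding A_def by (rule A_ne[OF d m b(2)])
  have "Inf A < c" using lt unfolding quantile_def A_def by simp
  from cInf_lessD[OF ne this] obtain q where "q \<in> A" "q < c" by blast
  thus ?thesis unfolding A_def using Fm_ge[OF d] by blast
qed


lemma mixture_props:
  assumes Ms: "\<And>i. i < d \<Longrightarrow> prob_space (Ms i) \<and> sets (Ms i) = sets borel"
    and lam: "\<And>i. i < d \<Longrightarrow> 0 \<le> lam i" and s1: "(\<Sum>i<d. lam i) = 1"
  shows "sets (mixture d lam Ms) = sets borel"
    "\<And>A. A \<in> sets borel \<Longrightarrow> measure (mixture d lam Ms) A = (\<Sum>i<d. lam i * measure (Ms i) A)"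
    "prob_space (mixture d lam Ms)"
proof -
  define \<mu> where "\<mu> = (\<lambda>A. \<Sum>i<d. ennreal (lam i) * emeasure (Ms i) A)"
  have mix: "mixture d lam Ms = measure_of UNIV (sets borel) \<mu>" unfolding mixture_def \<mu>_def ..
  show ss: "sets (mixture d lam Ms) = sets borel" unfolding mix
    using sets.sets_measure_of_eq[of borel \<mu>] by simp
  have sa: "sigma_algebra UNIV (sets borel)" using sets.sigma_algebra_axioms[of borel] by simp
  have pos: "positive (sets borel) \<mu>" unfolding positive_def \<mu>_def by simp
  have ca: "countably_additive (sets borel) \<mu>"
  proof (rule countably_additiveI)
    fix A :: "nat \<Rightarrow> real set" assume A: "range A \<subseteq> sets borel" "disjoint_family A" "\<Union> (range A) \<in> sets borel"
    have "(\<Sum>n. \<mu> (A n)) = (\<Sum>i<d. \<Sum>n. ennreal (lam i) * emeasure (Ms i) (A n))"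
      unfolding \<mu>_def by (rule suminf_sum) simp
    also have "\<dots> = (\<Sum>i<d. ennreal (lam i) * emeasure (Ms i) (\<Union> (range A)))"
    proof (intro sum.cong refl)
      fix i assume "i \<in> {..<d}"
      hence "sets (Ms i) = sets borel" using Ms by auto
      thus "(\<Sum>n. ennreal (lam i) * emeasure (Ms i) (A n)) = ennreal (lam i) * emeasure (Ms i) (\<Union> (range A))"
        using A by (simp add: ennreal_suminf_cmult suminf_emeasure)
    qed
    finally show "(\<Sum>n. \<mu> (A n)) = \<mu> (\<Union> (range A))" unfolding \<mu>_def .
  qed
  have em: "emeasure (mixture d lam Ms) A = \<mu> A" if A: "A \<in> sets borel" for A
    unfolding mix by (rule emeasure_measure_of_sigma[OF sa pos ca A])
  have fin: "\<mu> A = ennreal (\<Sum>i<d. lam i * measure (Ms i) A)" for A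
  proof -
    have "\<mu> A = (\<Sum>i<d. ennreal (lam i * measure (Ms i) A))"
      unfolding \<mu>_def
    proof (intro sum.cong refl)
      fix i assume "i \<in> {..<d}"
      hence "prob_space (Ms i)" using Ms by auto
      hence "emeasure (Ms i) A = ennreal (measure (Ms i) A)" by (simp add: finite_measure.emeasure_eq_measure prob_space_def)
      thus "ennreal (lam i) * emeasure (Ms i) A = ennreal (lam i * measure (Ms i) A)"
        using lam \<open>i \<in> {..<d}\<close> by (simp add: ennreal_mult)
    qed
    also have "\<dots> = ennreal (\<Sum>i<d. lam i * measure (Ms i) A)"
      using lam by (intro sum_ennreal) (auto intro: mult_nonneg_nonneg)
    finally show ?thesis .
  qed
  show meq: "measure (mixture d lam Ms) A = (\<Sum>i<d. lam i * measure (Ms i) A)" if A: "A \<in> sets borel" for A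
  proof -
    have nn: "0 \<le> (\<Sum>i<d. lam i * measure (Ms i) A)" using lam by (intro sum_nonneg) auto
    show ?thesis using em[OF A] fin[of A] nn by (simp add: measure_def)
  qed
  have sp: "space (mixture d lam Ms) = UNIV" using ss by (metis sets_eq_imp_space_eq space_borel)
  show "prob_space (mixture d lam Ms)"
  proof
    have "emeasure (mixture d lam Ms) UNIV = ennreal (\<Sum>i<d. lam i * measure (Ms i) UNIV)"
      using em[of UNIV] fin[of UNIV] by simp
    also have "(\<Sum>i<d. lam i * measure (Ms i) UNIV) = (\<Sum>i<d. lam i)"
    proof (intro sum.cong refl)
      fix i assume "i \<in> {..<d}"
      hence "prob_space (Ms i)" "sets (Ms i) = sets borel" using Ms by auto
      hence "measure (Ms i) UNIV = 1" by (metis prob_space.prob_space sets_eq_imp_space_eq space_borel)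
      thus "lam i * measure (Ms i) UNIV = lam i" by simp
    qed
    finally show "emeasure (mixture d lam Ms) (space (mixture d lam Ms)) = 1" using s1 sp by simp
  qed
qed


lemma hull_mem:
  assumes "Q \<in> convex_hull_meas d Ms"
  obtains lam where "\<forall>i<d. 0 \<le> lam i" "(\<Sum>i<d. lam i) = 1" "Q = mixture d lam Ms"
proof -
  from assms obtain lam where "Q = mixture d lam Ms" "\<forall>i<d. 0 \<le> lam i" "(\<Sum>i<d. lam i) = 1"
    unfolding convex_hull_meas_def by blast
  thus ?thesis using that by auto
qed

lemma rho_nonneg:
  fixes P :: "real measure"
  assumes f: "fdiv_generator f" and P: "prob_space P" "sets P = sets borel"
    and Ms: "\<And>i. i < d \<Longrightarrow> prob_space (Ms i) \<and> sets (Ms i) = sets borel"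
  shows "0 \<le> (INF P0\<in>convex_hull_meas d Ms. fdiv f P P0)"
proof (rule INF_greatest)
  fix Q assume "Q \<in> convex_hull_meas d Ms"
  then obtain lam where lam0: "\<forall>i<d. 0 \<le> lam i" "(\<Sum>i<d. lam i) = 1" "Q = mixture d lam Ms"
    by (rule hull_mem)
  note lam = lam0(1)[rule_format] lam0(2,3)
  note mp = mixture_props[OF Ms lam(1,2)]
  have Qp: "prob_space Q" and Qs: "sets Q = sets borel" using mp lam(3) by auto
  show "0 \<le> fdiv f P Q" using fdiv_nonneg[OF f P(1) Qp] P(2) Qs by simp
qed

lemma div_step:
  fixes P :: "real measure"
  assumes f: "fdiv_generator f" and P: "prob_space P" "sets P = sets borel"
    and Ms: "\<And>i. i < d \<Longrightarrow> prob_space (Ms i) \<and> sets (Ms i) = sets borel"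
    and fin: "(INF P0\<in>convex_hull_meas d Ms. fdiv f P P0) \<noteq> \<infinity>"
    and b: "0 < \<beta>" "\<beta> < 1"
    and cdf: "\<And>i. i < d \<Longrightarrow> \<beta> \<le> measure (Ms i) {..t}"
  shows "g_fun f (real_of_ereal (INF P0\<in>convex_hull_meas d Ms. fdiv f P P0)) \<beta> \<le> measure P {..t}"
proof -
  define R where "R = (INF P0\<in>convex_hull_meas d Ms. fdiv f P P0)"
  have R0: "0 \<le> R" unfolding R_def by (rule rho_nonneg[OF f P Ms])
  have Rr: "R = ereal (real_of_ereal R)" using R0 fin unfolding R_def[symmetric] by (cases R) auto
  have r0: "0 \<le> real_of_ereal R" using R0 by (simp add: real_of_ereal_pos)
  define a where "a = measure P {..t}"
  have a01: "0 \<le> a" "a \<le> 1" unfolding a_def using P(1) by (auto simp: prob_space.prob_le_1)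
  note gp = g_fun_props[OF f _ _ r0, of \<beta>]
  show ?thesis
  proof (cases "\<beta> \<le> a")
    case True
    thus ?thesis using gp(2) b unfolding R_def a_def by simp
  next
    case False
    hence ab: "a < \<beta>" by simp
    have "persp f \<beta> a + persp f (1 - \<beta>) (1 - a) \<le> R"
      unfolding R_def
    proof (rule INF_greatest)
      fix Q assume "Q \<in> convex_hull_meas d Ms"
      then obtain lam where lam0: "\<forall>i<d. 0 \<le> lam i" "(\<Sum>i<d. lam i) = 1" "Q = mixture d lam Ms"
        by (rule hull_mem)
      note lam = lam0(1)[rule_format] lam0(2,3)
      note mp = mixture_props[OF Ms lam(1,2)]
      have Qp: "prob_space Q" and Qs: "sets Q = sets borel" using mp lam(3) by auto
      have sPQ: "sets P = sets Q" using P(2) Qs by simp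
      define bb where "bb = measure Q {..t}"
      have bbeq: "bb = (\<Sum>i<d. lam i * measure (Ms i) {..t})" unfolding bb_def lam(3) by (rule mp(2)) measurable
      have "(\<Sum>i<d. lam i * \<beta>) \<le> (\<Sum>i<d. lam i * measure (Ms i) {..t})"
        using lam(1) cdf by (intro sum_mono mult_left_mono) auto
      hence bbge: "\<beta> \<le> bb" unfolding bbeq using lam(2) by (simp add: sum_distrib_right[symmetric])
      have bb1: "bb \<le> 1" unfolding bb_def using Qp by (simp add: prob_space.prob_le_1)
      show "persp f \<beta> a + persp f (1 - \<beta>) (1 - a) \<le> fdiv f P Q"
      proof (cases "fdiv f P Q = \<infinity>")
        case True thus ?thesis by simp
      next
        case nf: False
        hence ac: "absolutely_continuous Q P" using sPQ unfolding fdiv_def by (auto split: if_splits)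
        show ?thesis
        proof (cases "bb = 1")
          case True
          have spQ: "space Q = UNIV" using Qs by (metis sets_eq_imp_space_eq space_borel)
          have spP: "space P = UNIV" using P(2) by (metis sets_eq_imp_space_eq space_borel)
          have "measure Q (space Q - {..t}) = 0"
            using prob_space.prob_compl[OF Qp, of "{..t}"] Qs True by (simp add: bb_def)
          hence "{t<..} \<in> null_sets Q" using Qs spQ
            by (metis Compl_atMost Compl_eq_Diff_UNIV atLeastAtMost_borel Qp prob_space_def finite_measure.emeasure_eq_measure
                 greaterThan_borel null_setsI ennreal_0 sets_borel_eq_count_space sets_lebesgue_on_refl)
          hence "{t<..} \<in> null_sets P" using ac unfolding absolutely_continuous_def by blast
          hence "measure P {t<..} = 0" by (simp add: measure_def null_setsD1)
          moreover have "measure P {t<..} = 1 - a"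
            using prob_space.prob_compl[OF P(1), of "{..t}"] P(2) spP unfolding a_def
            by (simp add: Compl_atMost[symmetric] Compl_eq_Diff_UNIV)
          ultimately have "a = 1" by simp
          thus ?thesis using ab b by simp
        next
          case False
          hence bb1': "bb < 1" using bb1 by simp
          have "persp f \<beta> a + persp f (1 - \<beta>) (1 - a) \<le> persp f bb a + persp f (1 - bb) (1 - a)"
            by (rule hb_mono[OF f a01(1) ab bbge bb1'])
          also have "\<dots> \<le> fdiv f P Q" unfolding a_def bb_def
            using fdiv_binary[OF f P(1) Qp sPQ, of "{..t}"] Qs bbge b bb1' unfolding bb_def by simp
          finally show ?thesis .
        qed
      qed
    qed
    hence "persp f \<beta> a + persp f (1 - \<beta>) (1 - a) \<le> ereal (real_of_ereal R)" using Rr by simp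
    hence "g_fun f (real_of_ereal R) \<beta> \<le> a" using gp(3)[of a] a01 b by simp
    thus ?thesis unfolding R_def a_def .
  qed
qed


lemma comp_meas[measurable]: "(\<lambda>x. x k) \<in> borel_measurable (Pi\<^sub>M I (\<lambda>_. borel :: real measure))"
proof (cases "k \<in> I")
  case True thus ?thesis by (rule measurable_component_singleton)
next
  case False
  have eq: "\<And>x. x \<in> space (Pi\<^sub>M I (\<lambda>_. borel :: real measure)) \<Longrightarrow> x k = (undefined :: real)"
    using False unfolding space_PiM by (rule PiE_arb[rotated])
  have "(\<lambda>x. undefined :: real) \<in> borel_measurable (Pi\<^sub>M I (\<lambda>_. borel :: real measure))" by simp
  moreover have "(\<lambda>x. x k) \<in> borel_measurable (Pi\<^sub>M I (\<lambda>_. borel :: real measure)) \<longleftrightarrow>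
        (\<lambda>x. undefined :: real) \<in> borel_measurable (Pi\<^sub>M I (\<lambda>_. borel :: real measure))"
    by (rule Sigma_Algebra.measurable_cong) (rule eq)
  ultimately show ?thesis by simp
qed

lemma Fh_alt: "Fh m x i q = (1 / real (m i)) * (\<Sum>j<m i. if x (i, j) \<le> q then 1 else 0)"
  unfolding Fh_def by (intro arg_cong2[where f = "(*)"] refl sum.cong) (auto simp: indicator_def)

lemma ind_alt: "indicator {..<c} (y :: real) = (if y < c then 1 else (0::real))"
  by (simp add: indicator_def)


theorem theorem8:
  fixes M :: "'w measure" and MX :: "'x measure" and MY :: "'y measure"
    and s :: "'x \<times> 'y \<Rightarrow> real"
    and d :: nat and S :: "nat \<Rightarrow> ('x \<times> 'y) measure" and m :: "nat \<Rightarrow> nat"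
    and Z :: "nat \<Rightarrow> nat \<Rightarrow> 'w \<Rightarrow> 'x \<times> 'y"
    and Xt :: "'w \<Rightarrow> 'x" and Yt :: "'w \<Rightarrow> 'y"
    and P :: "real measure"
    and f :: "real \<Rightarrow> ereal" and \<rho> \<alpha> \<epsilon> :: real
  assumes M: "prob_space M"
    and s_meas: "s \<in> borel_measurable (MX \<Otimes>\<^sub>M MY)"
    and S: "\<And>i. i < d \<Longrightarrow> prob_space (S i) \<and> sets (S i) = sets (MX \<Otimes>\<^sub>M MY)"
    and f: "fdiv_generator f"
    and \<rho>: "\<rho> > 0" and \<alpha>: "0 < \<alpha>" "\<alpha> < 1"
    and m: "\<And>i. i < d \<Longrightarrow> m i > 0"
    and Z_meas: "\<And>i j. i < d \<Longrightarrow> j < m i \<Longrightarrow> Z i j \<in> measurable M (MX \<Otimes>\<^sub>M MY)"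
    and Z_distr: "\<And>i j. i < d \<Longrightarrow> j < m i \<Longrightarrow> distr M (MX \<Otimes>\<^sub>M MY) (Z i j) = S i"
    and Z_indep: "\<And>i. i < d \<Longrightarrow> prob_space.indep_vars M (\<lambda>_. MX \<Otimes>\<^sub>M MY) (Z i) {..<m i}"
    and Xt_meas: "Xt \<in> measurable M MX" and Yt_meas: "Yt \<in> measurable M MY"
    and P_distr: "distr M borel (\<lambda>w. s (Xt w, Yt w)) = P"
    and P_amb: "P \<in> ambiguity_set f \<rho> d (\<lambda>i. distr (S i) borel s)"
    and test_indep: "prob_space.indep_set M
        (sigma_sets (space M) {(\<lambda>w. s (Xt w, Yt w)) -` A \<inter> space M | A. A \<in> sets borel})
        (sigma_sets (space M) {(\<lambda>w. \<lambda>k\<in>(SIGMA i:{..<d}. {..<m i}). s (Z (fst k) (snd k) w)) -` A \<inter> space M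
            | A. A \<in> sets (Pi\<^sub>M (SIGMA i:{..<d}. {..<m i}) (\<lambda>_. borel :: real measure))})"
    and \<epsilon>: "\<epsilon> > 0"
  shows
    "let V = (\<lambda>i j w. s (Z i j w));
         Fhat = (\<lambda>i w x. (1 / real (m i)) * (\<Sum>j<m i. indicator {..x} (V i j w)));
         Fmin = (\<lambda>w x. Min ((\<lambda>i. Fhat i w x) ` {..<d}));
         \<rho>star = (INF P0\<in>convex_hull_meas d (\<lambda>i. distr (S i) borel s). fdiv f P P0);
         t = (\<lambda>w. quantile (g_inv f \<rho> (1 - \<alpha>)) (Fmin w))
     in measure M {w \<in> space M. Yt w \<in> conf_set (space MY) s (t w) (Xt w)}
        \<ge> (1 - 2 * (\<Sum>i<d. exp (- 2 * real (m i) * \<epsilon>\<^sup>2)))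
            * g_fun f (real_of_ereal \<rho>star) (g_inv f \<rho> (1 - \<alpha>) - \<epsilon>)"
proof -
  interpret prob_space M by (rule M)
  define Sg where "Sg = (SIGMA i:{..<d}. {..<m i})"
  define MD where "MD = (Pi\<^sub>M Sg (\<lambda>_. borel :: real measure))"
  define V where "V = (\<lambda>w. s (Xt w, Yt w))"
  define W where "W = (\<lambda>w. \<lambda>k\<in>Sg. s (Z (fst k) (snd k) w))"
  define Ds where "Ds = (\<lambda>i. distr (S i) borel s)"
  define \<beta> where "\<beta> = g_inv f \<rho> (1 - \<alpha>)"
  define \<beta>' where "\<beta>' = \<beta> - \<epsilon>"
  define \<rho>s where "\<rho>s = (INF P0\<in>convex_hull_meas d Ds. fdiv f P P0)"
  define \<gamma> where "\<gamma> = g_fun f (real_of_ereal \<rho>s) \<beta>'"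
  define E where "E = (\<Sum>i<d. exp (- 2 * real (m i) * \<epsilon>\<^sup>2))"
  define Tq where "Tq = (\<lambda>x. quantile \<beta> (Fm d m x))"
  have finSg: "finite Sg" unfolding Sg_def by (auto intro: finite_SigmaI)
  have s_meas': "\<And>i. i < d \<Longrightarrow> s \<in> borel_measurable (S i)"
    using S s_meas by (metis measurable_cong_sets)
  have Ds: "\<And>i. i < d \<Longrightarrow> prob_space (Ds i) \<and> sets (Ds i) = sets borel"
    unfolding Ds_def using S s_meas' by (auto intro: prob_space.prob_space_distr)
  have Pamb: "prob_space P" "sets P = sets borel" "\<exists>S0\<in>convex_hull_meas d Ds. fdiv f P S0 \<le> ereal \<rho>"
    using P_amb unfolding ambiguity_set_def Ds_def by auto
  then obtain S0 where S0: "S0 \<in> convex_hull_meas d Ds" "fdiv f P S0 \<le> ereal \<rho>" by blast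
  have d0: "d > 0"
  proof -
    from S0(1) obtain lam :: "nat \<Rightarrow> real" where "(\<Sum>i<d. lam i) = 1" unfolding convex_hull_meas_def by blast
    thus ?thesis by (cases d) auto
  qed
  have \<rho>s_fin: "\<rho>s \<noteq> \<infinity>"
  proof -
    have "\<rho>s \<le> fdiv f P S0" unfolding \<rho>s_def using S0(1) by (rule INF_lower)
    thus ?thesis using S0(2) by auto
  qed
  have \<rho>s0: "0 \<le> \<rho>s" unfolding \<rho>s_def by (rule rho_nonneg[OF f Pamb(1,2) Ds])
  have r0: "0 \<le> real_of_ereal \<rho>s" using \<rho>s0 by (simp add: real_of_ereal_pos)
  have \<beta>b: "1 - \<alpha> \<le> \<beta>" "\<beta> \<le> 1" unfolding \<beta>_def using g_inv_bounds[OF f _ \<alpha>] \<rho> by auto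
  have \<beta>0: "0 < \<beta>" using \<beta>b \<alpha> by simp
  have E0: "0 \<le> E" unfolding E_def by (intro sum_nonneg) auto
  have \<gamma>0: "0 \<le> \<gamma>"
    unfolding \<gamma>_def using g_fun_props(1)[OF f _ _ r0, of \<beta>'] \<beta>b \<epsilon> by (cases "\<beta>' < 0") (auto simp: g_fun_def \<beta>'_def)
  have goal_eq: "(let V = (\<lambda>i j w. s (Z i j w));
         Fhat = (\<lambda>i w x. (1 / real (m i)) * (\<Sum>j<m i. indicator {..x} (V i j w)));
         Fmin = (\<lambda>w x. Min ((\<lambda>i. Fhat i w x) ` {..<d}));
         \<rho>star = (INF P0\<in>convex_hull_meas d (\<lambda>i. distr (S i) borel s). fdiv f P P0);
         t = (\<lambda>w. quantile (g_inv f \<rho> (1 - \<alpha>)) (Fmin w))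
     in measure M {w \<in> space M. Yt w \<in> conf_set (space MY) s (t w) (Xt w)}
        \<ge> (1 - 2 * (\<Sum>i<d. exp (- 2 * real (m i) * \<epsilon>\<^sup>2)))
            * g_fun f (real_of_ereal \<rho>star) (g_inv f \<rho> (1 - \<alpha>) - \<epsilon>))
     \<longleftrightarrow> measure M {w \<in> space M. V w \<le> Tq (W w)} \<ge> (1 - 2 * E) * \<gamma>"
  proof -
    have "{w \<in> space M. Yt w \<in> conf_set (space MY) s (quantile \<beta> (\<lambda>x. Min ((\<lambda>i. (1 / real (m i)) * (\<Sum>j<m i. indicator {..x} (s (Z i j w)))) ` {..<d}))) (Xt w)}
        = {w \<in> space M. V w \<le> Tq (W w)}"
    proof (intro Collect_cong conj_cong refl)
      fix w assume w: "w \<in> space M"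
      have "(\<lambda>x. Min ((\<lambda>i. (1 / real (m i)) * (\<Sum>j<m i. indicator {..x} (s (Z i j w)))) ` {..<d})) = Fm d m (W w)"
      proof
        fix x
        show "Min ((\<lambda>i. (1 / real (m i)) * (\<Sum>j<m i. indicator {..x} (s (Z i j w)))) ` {..<d}) = Fm d m (W w) x"
          unfolding Fm_def Fh_def W_def Sg_def
          by (intro arg_cong[where f = Min] image_cong refl arg_cong2[where f = "(*)"] sum.cong) auto
      qed
      moreover have "Yt w \<in> space MY" using Yt_meas w by (rule measurable_space)
      ultimately show "Yt w \<in> conf_set (space MY) s (quantile \<beta> (\<lambda>x. Min ((\<lambda>i. (1 / real (m i)) * (\<Sum>j<m i. indicator {..x} (s (Z i j w)))) ` {..<d}))) (Xt w)
          \<longleftrightarrow> V w \<le> Tq (W w)"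
        unfolding conf_set_def V_def Tq_def by simp
    qed
    thus ?thesis unfolding Let_def \<beta>_def[symmetric] E_def[symmetric] \<gamma>_def \<rho>s_def Ds_def \<beta>'_def by simp
  qed
  show ?thesis
    unfolding goal_eq
  proof (cases "\<beta>' \<le> 0")
    case True
    have "\<gamma> = 0"
    proof (cases "\<beta>' < 0")
      case True thus ?thesis by (simp add: \<gamma>_def g_fun_def)
    next
      case False
      hence "\<beta>' = 0" using \<open>\<beta>' \<le> 0\<close> by simp
      thus ?thesis using g_fun_props(1,2)[OF f _ _ r0, of \<beta>'] unfolding \<gamma>_def by simp
    qed
    thus "(1 - 2 * E) * \<gamma> \<le> measure M {w \<in> space M. V w \<le> Tq (W w)}" by simp
  next
    case False
    hence b'0: "0 < \<beta>'" by simp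
    have b'1: "\<beta>' < 1" using \<beta>b \<epsilon> unfolding \<beta>'_def by simp
    have "\<forall>i<d. \<exists>c. \<beta>' \<le> measure (Ds i) {..c} \<and> measure (Ds i) {..<c} \<le> \<beta>'"
    proof safe
      fix i assume i: "i < d"
      have "real_distribution (Ds i)" using Ds[OF i]
        by (auto simp: real_distribution_def real_distribution_axioms_def)
      from cdf_point[OF this b'0 b'1] show "\<exists>c. \<beta>' \<le> measure (Ds i) {..c} \<and> measure (Ds i) {..<c} \<le> \<beta>'" by auto
    qed
    then obtain c where c: "\<And>i. i < d \<Longrightarrow> \<beta>' \<le> measure (Ds i) {..c i}"
      "\<And>i. i < d \<Longrightarrow> measure (Ds i) {..<c i} \<le> \<beta>'" by metis
    have Vm[measurable]: "V \<in> borel_measurable M"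
      unfolding V_def by (rule measurable_compose[OF measurable_Pair[OF Xt_meas Yt_meas] s_meas])
    have Wm[measurable]: "W \<in> measurable M MD" unfolding W_def MD_def
    proof (rule measurable_restrict)
      fix k assume "k \<in> Sg"
      hence "fst k < d" "snd k < m (fst k)" unfolding Sg_def by auto
      thus "(\<lambda>w. s (Z (fst k) (snd k) w)) \<in> borel_measurable M" using measurable_compose[OF Z_meas s_meas] by blast
    qed
    define C where "C = {p \<in> space (borel \<Otimes>\<^sub>M MD). \<forall>k\<in>Sg. (\<forall>i<d. \<beta> \<le> (1 / real (m i)) * (\<Sum>j<m i. if snd p (i, j) \<le> snd p k then 1 else 0)) \<longrightarrow> fst p \<le> snd p k}"
    have Cm: "C \<in> sets (borel \<Otimes>\<^sub>M MD)" unfolding C_def MD_def using finSg by measurable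
    have Csec: "\<And>v y. y \<in> space MD \<Longrightarrow> (v, y) \<in> C \<longleftrightarrow> v \<le> Tq y"
      unfolding C_def Tq_def using T_char[OF d0 m \<beta>0 \<beta>b(2)] by (simp add: space_pair_measure Fh_alt Sg_def)
    have Seq: "{w \<in> space M. V w \<le> Tq (W w)} = (\<lambda>w. (V w, W w)) -` C \<inter> space M"
      using Csec measurable_space[OF Wm] by auto
    have h: "indep_set (sigma_sets (space M) {V -` A \<inter> space M | A. A \<in> sets borel})
        (sigma_sets (space M) {W -` A \<inter> space M | A. A \<in> sets MD})"
      using test_indep unfolding V_def W_def MD_def Sg_def .
    have DW: "prob_space (distr M MD W)" by (rule prob_space_distr[OF Wm])
    have PD: "distr M borel V = P" using P_distr unfolding V_def .
    have pm: "(\<lambda>w. (V w, W w)) \<in> measurable M (borel \<Otimes>\<^sub>M MD)" using Vm Wm by measurable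
    have prodeq: "P \<Otimes>\<^sub>M distr M MD W = distr M (borel \<Otimes>\<^sub>M MD) (\<lambda>w. (V w, W w))"
    proof (rule pair_measure_eqI)
      show "sigma_finite_measure P" using Pamb(1) by (rule prob_space_imp_sigma_finite)
      show "sigma_finite_measure (distr M MD W)" using DW by (rule prob_space_imp_sigma_finite)
      show "sets (P \<Otimes>\<^sub>M distr M MD W) = sets (distr M (borel \<Otimes>\<^sub>M MD) (\<lambda>w. (V w, W w)))"
        using sets_pair_measure_cong[of P borel "distr M MD W" MD] Pamb(2) by simp
      fix A B assume A: "A \<in> sets P" and B: "B \<in> sets (distr M MD W)"
      have A': "A \<in> sets borel" using A Pamb(2) by simp
      have B': "B \<in> sets MD" using B by simp
      have a1: "V -` A \<inter> space M \<in> sigma_sets (space M) {V -` A \<inter> space M | A. A \<in> sets borel}"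
        using A' by (intro sigma_sets.Basic) blast
      have b1: "W -` B \<inter> space M \<in> sigma_sets (space M) {W -` A \<inter> space M | A. A \<in> sets MD}"
        using B' by (intro sigma_sets.Basic) blast
      have eqAB: "(\<lambda>w. (V w, W w)) -` (A \<times> B) \<inter> space M = (V -` A \<inter> space M) \<inter> (W -` B \<inter> space M)" by auto
      have "emeasure (distr M (borel \<Otimes>\<^sub>M MD) (\<lambda>w. (V w, W w))) (A \<times> B)
          = emeasure M ((V -` A \<inter> space M) \<inter> (W -` B \<inter> space M))"
        using A' B' by (subst emeasure_distr[OF pm]) (auto simp: eqAB)
      also have "\<dots> = ennreal (prob (V -` A \<inter> space M) * prob (W -` B \<inter> space M))"
        unfolding emeasure_eq_measure using indep_setD[OF h a1 b1] by simp
      also have "\<dots> = emeasure P A * emeasure (distr M MD W) B"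
        unfolding PD[symmetric] using A' B' Vm Wm
        by (simp add: emeasure_distr emeasure_eq_measure ennreal_mult)
      finally show "emeasure P A * emeasure (distr M MD W) B = emeasure (distr M (borel \<Otimes>\<^sub>M MD) (\<lambda>w. (V w, W w))) (A \<times> B)" ..
    qed
    have sf: "pair_sigma_finite P (distr M MD W)"
      unfolding pair_sigma_finite_def using Pamb(1) DW by (simp add: prob_space_imp_sigma_finite)
    have Cm': "C \<in> sets (P \<Otimes>\<^sub>M distr M MD W)"
      using Cm sets_pair_measure_cong[of P borel "distr M MD W" MD] Pamb(2) by simp
    define G where "G = {y \<in> space MD. \<forall>i<d. (\<Sum>j<m i. if y (i, j) < c i then 1 else 0) < real (m i) * \<beta>}"
    have Gm: "G \<in> sets MD" unfolding G_def MD_def by measurable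
    have \<rho>s_fin': "(INF P0\<in>convex_hull_meas d Ds. fdiv f P P0) \<noteq> \<infinity>" using \<rho>s_fin unfolding \<rho>s_def .
    have good: "\<gamma> \<le> measure P {..Tq y}" if y: "y \<in> G" for y
    proof -
      have cdf: "\<beta>' \<le> measure (Ds i) {..Tq y}" if i: "i < d" for i
      proof -
        interpret Di: prob_space "Ds i" using Ds[OF i] by simp
        have "c i \<le> Tq y"
        proof (rule ccontr)
          assume "\<not> c i \<le> Tq y"
          hence "quantile \<beta> (Fm d m y) < c i" unfolding Tq_def by simp
          from T_below[OF d0 m \<beta>0 \<beta>b(2) this] obtain q where q: "q < c i" "\<forall>i<d. \<beta> \<le> Fh m y i q" by blast
          have "\<beta> \<le> Fh m y i q" using q i by blast
          also have "Fh m y i q \<le> (1 / real (m i)) * (\<Sum>j<m i. if y (i, j) < c i then 1 else 0)"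
            unfolding Fh_def using q(1) by (intro mult_left_mono sum_mono) (auto simp: indicator_def)
          finally have "real (m i) * \<beta> \<le> (\<Sum>j<m i. if y (i, j) < c i then 1 else 0)"
            using m[OF i] by (simp add: field_simps)
          thus False using y i unfolding G_def by force
        qed
        hence "measure (Ds i) {..c i} \<le> measure (Ds i) {..Tq y}"
          using Ds[OF i] by (intro Di.finite_measure_mono) auto
        thus ?thesis using c(1)[OF i] by simp
      qed
      show ?thesis unfolding \<gamma>_def \<rho>s_def using div_step[OF f Pamb(1,2) Ds \<rho>s_fin' b'0 b'1 cdf] by simp
    qed
    have Pfin: "\<And>A. emeasure P A = ennreal (measure P A)"
      using Pamb(1) by (simp add: finite_measure.emeasure_eq_measure prob_space_def)
    have "emeasure M {w \<in> space M. V w \<le> Tq (W w)} = emeasure (distr M (borel \<Otimes>\<^sub>M MD) (\<lambda>w. (V w, W w))) C"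
      unfolding Seq by (rule emeasure_distr[OF pm Cm, symmetric])
    also have "\<dots> = emeasure (P \<Otimes>\<^sub>M distr M MD W) C" unfolding prodeq ..
    also have "\<dots> = (\<integral>\<^sup>+y. emeasure P ((\<lambda>x. (x, y)) -` C) \<partial>distr M MD W)"
      by (rule pair_sigma_finite.emeasure_pair_measure_alt2[OF sf Cm'])
    also have "\<dots> \<ge> (\<integral>\<^sup>+y. ennreal \<gamma> * indicator G y \<partial>distr M MD W)"
    proof (rule nn_integral_mono)
      fix y assume "y \<in> space (distr M MD W)"
      hence ysp: "y \<in> space MD" by simp
      show "ennreal \<gamma> * indicator G y \<le> emeasure P ((\<lambda>x. (x, y)) -` C)"
      proof (cases "y \<in> G")
        case True
        have "(\<lambda>x. (x, y)) -` C = {..Tq y}" using Csec[OF ysp] by auto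
        thus ?thesis using good[OF True] True by (simp add: Pfin ennreal_leI)
      qed simp
    qed
    also have "(\<integral>\<^sup>+y. ennreal \<gamma> * indicator G y \<partial>distr M MD W) = ennreal \<gamma> * emeasure (distr M MD W) G"
      using Gm by (intro nn_integral_cmult_indicator) simp
    also have "emeasure (distr M MD W) G = emeasure M (W -` G \<inter> space M)"
      by (rule emeasure_distr[OF Wm Gm])
    finally have chain: "ennreal \<gamma> * emeasure M (W -` G \<inter> space M) \<le> emeasure M {w \<in> space M. V w \<le> Tq (W w)}" .
    define Bad where "Bad = (\<lambda>i. {w\<in>space M. real (m i) * \<beta> \<le> (\<Sum>j<m i. indicator {..<c i} (s (Z i j w)))})"
    have Badm: "\<And>i. i < d \<Longrightarrow> Bad i \<in> events"
    proof -
      fix i assume i: "i < d"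
      have "\<And>j. j < m i \<Longrightarrow> (\<lambda>w. s (Z i j w)) \<in> borel_measurable M"
        using measurable_compose[OF Z_meas s_meas] i by blast
      thus "Bad i \<in> events" unfolding Bad_def by measurable
    qed
    have Weq: "W -` G \<inter> space M = space M - (\<Union>i\<in>{..<d}. Bad i)"
    proof -
      have "W w \<in> G \<longleftrightarrow> (\<forall>i<d. \<not> real (m i) * \<beta> \<le> (\<Sum>j<m i. indicator {..<c i} (s (Z i j w))))"
        if w: "w \<in> space M" for w
      proof -
        have "W w \<in> space MD" using measurable_space[OF Wm w] .
        moreover have "\<And>i. i < d \<Longrightarrow> (\<Sum>j<m i. if W w (i, j) < c i then 1 else 0) = (\<Sum>j<m i. indicator {..<c i} (s (Z i j w)) :: real)"
          unfolding W_def Sg_def by (intro sum.cong) (auto simp: indicator_def)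
        ultimately show ?thesis unfolding G_def by (auto simp: not_le)
      qed
      thus ?thesis unfolding Bad_def by auto
    qed
    have probBad: "prob (Bad i) \<le> exp (- 2 * real (m i) * \<epsilon>\<^sup>2)" if i: "i < d" for i
    proof -
      have ind_i: "indep_vars (\<lambda>_. borel) (\<lambda>j w. s (Z i j w)) {..<m i}"
        using indep_vars_compose2[OF Z_indep[OF i], of "\<lambda>_. s" "\<lambda>_. borel"] s_meas by simp
      have dist: "distr M borel (\<lambda>w. s (Z i j w)) = Ds i" if j: "j < m i" for j
      proof -
        have "distr M borel (\<lambda>w. s (Z i j w)) = distr (distr M (MX \<Otimes>\<^sub>M MY) (Z i j)) borel s"
          using Z_meas[OF i j] s_meas by (subst distr_distr) (auto simp: comp_def)
        thus ?thesis using Z_distr[OF i j] unfolding Ds_def by simp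
      qed
      have pc: "measure (Ds i) {..<c i} \<le> \<beta> - \<epsilon>" using c(2)[OF i] unfolding \<beta>'_def .
      show ?thesis unfolding Bad_def
        using hoeff_bad[OF M m[OF i] ind_i dist pc] \<epsilon> by simp
    qed
    have "prob (\<Union>i\<in>{..<d}. Bad i) \<le> (\<Sum>i<d. prob (Bad i))"
      using Badm by (intro finite_measure_subadditive_finite) auto
    also have "\<dots> \<le> E" unfolding E_def using probBad by (intro sum_mono) auto
    finally have pU: "prob (\<Union>i\<in>{..<d}. Bad i) \<le> E" .
    have pG: "1 - E \<le> prob (W -` G \<inter> space M)"
      unfolding Weq using prob_compl[of "\<Union>i\<in>{..<d}. Bad i"] Badm pU by auto
    have "ennreal (\<gamma> * prob (W -` G \<inter> space M)) \<le> ennreal (measure M {w \<in> space M. V w \<le> Tq (W w)})"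
      using chain \<gamma>0 by (simp add: emeasure_eq_measure ennreal_mult)
    hence "\<gamma> * prob (W -` G \<inter> space M) \<le> measure M {w \<in> space M. V w \<le> Tq (W w)}"
      by (simp add: ennreal_le_iff)
    moreover have "(1 - 2 * E) * \<gamma> \<le> \<gamma> * prob (W -` G \<inter> space M)"
    proof -
      have "(1 - 2 * E) * \<gamma> \<le> (1 - E) * \<gamma>" using E0 \<gamma>0 by (intro mult_right_mono) auto
      also have "\<dots> \<le> prob (W -` G \<inter> space M) * \<gamma>" using pG \<gamma>0 by (intro mult_right_mono) auto
      finally show ?thesis by (simp add: mult.commute)
    qed
    ultimately show "(1 - 2 * E) * \<gamma> \<le> measure M {w \<in> space M. V w \<le> Tq (W w)}" by linarith
  qed
qed


end
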